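(* Let $\mathfrak{P}_1=(\rho^{(1)}_{t_0},\mathcal{E}^{(1)}_{t_1\leftarrow t_0},\dots,\mathcal{E}^{(1)}_{t_n\leftarrow t_{n-1}})$ and $\mathfrak{P}_2=(\rho^{(2)}_{t_0},\mathcal{E}^{(2)}_{t_1\leftarrow t_0},\dots,\mathcal{E}^{(2)}_{t_n\leftarrow t_{n-1}})$ be multi-time quantum processes, with measurements $\{\Pi^{(1),t_k}_{b}\}$ and $\{\Pi^{(2),t_k}_{c}\}$ respectively, and let $\mathfrak{P}_1\otimes\mathfrak{P}_2$ be the process with initial state $\rho^{(1)}_{t_0}\otimes\rho^{(2)}_{t_0}$, channels $\mathcal{E}^{(1)}_{t_j\leftarrow t_{j-1}}\otimes\mathcal{E}^{(2)}_{t_j\leftarrow t_{j-1}}$, and product measurements $\{\Pi^{(1),t_k}_{b}\otimes\Pi^{(2),t_k}_{c}\}_{b,c}$. Then $$\mathcal{N}\big(\overrightarrow{Q}_{\rm KD}(\mathfrak{P}_1\otimes\mathfrak{P}_2)\big)=\mathcal{N}\big(\overrightarrow{Q}_{\rm KD}(\mathfrak{P}_1)\big)\mathcal{N}\big(\overrightarrow{Q}_{\rm KD}(\mathfrak{P}_2)\big)+\mathcal{N}\big(\overrightarrow{Q}_{\rm KD}(\mathfrak{P}_1)\big)+\mathcal{N}\big(\overrightarrow{Q}_{\rm KD}(\mathfrak{P}_2)\big),$$ and, with $\mathcal{N}'[Q]=\log\sum|Q|$, $$\mathcal{N}'\big(\overrightarrow{Q}_{\rm KD}(\mathfrak{P}_1\otimes\mathfrak{P}_2)\big)=\mathcal{N}'\big(\overrightarrow{Q}_{\rm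 KD}(\mathfrak{P}_1)\big)+\mathcal{N}'\big(\overrightarrow{Q}_{\rm KD}(\mathfrak{P}_2)\big).$$ The same holds for the left and doubled temporal KD distributions.
   Context: A multi-time quantum process $(\rho_{t_0},\mathcal{E}_{t_1\leftarrow t_0},\dots,\mathcal{E}_{t_n\leftarrow t_{n-1}})$ consists of a density operator and CPTP maps on finite-dimensional spaces, extended linearly to all operators; complete families of orthogonal projectors are fixed at each time. $\overrightarrow{Q}_{\rm KD}(b_n,\dots,b_0)=\operatorname{Tr}[\mathcal{E}_{t_n\leftarrow t_{n-1}}(\cdots\mathcal{E}_{t_1\leftarrow t_0}(\rho_{t_0}\Pi^{t_0}_{b_0})\Pi^{t_1}_{b_1}\cdots)\Pi^{t_n}_{b_n}]$; $\overleftarrow{Q}_{\rm KD}(a_n,\dots,a_0)=\operatorname{Tr}[\Pi^{t_n}_{a_n}\mathcal{E}_{t_n\leftarrow t_{n-1}}(\cdots\Pi^{t_1}_{a_1}\mathcal{E}_{t_1\leftarrow t_0}(\Pi^{t_0}_{a_0}\rho_{t_0})\cdots)]$; $\overleftrightarrow{Q}_{\rm KD}(a;b)=\operatorname{Tr}[\Pi^{t_n}_{a_n}\mathcal{E}_{t_n\leftarrow t_{n-1}}(\cdots\Pi^{t_1}_{a_1}\mathcal{E}_{t_1\leftarrow t_0}(\Pi^{t_0}_{a_0}\rho_{t_0}\Pi^{t_0}_{b_0})\Pi^{t_1}_{b_1}\cdots)\Pi^{t_n}_{b_n}]$. For any such distribution $Q$, $\mathcal{N}[Q]=\sum_{\text{all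 outcomes}}|Q|-1$. *)

theory Defs
  imports Complex_Main "Jordan_Normal_Form.Matrix"
begin

definition mtrace :: "complex mat \<Rightarrow> complex" where
  "mtrace A = (\<Sum>i<dim_row A. A $$ (i, i))"

definition madj :: "complex mat \<Rightarrow> complex mat" where
  "madj A = mat (dim_col A) (dim_row A) (\<lambda>(i, j). cnj (A $$ (j, i)))"

definition psd :: "nat \<Rightarrow> complex mat \<Rightarrow> bool" where
  "psd d A \<longleftrightarrow> A \<in> carrier_mat d d \<and>
     (\<forall>v :: nat \<Rightarrow> complex.
        let q = (\<Sum>i<d. \<Sum>j<d. cnj (v i) * A $$ (i, j) * v j) in Im q = 0 \<and> Re q \<ge> 0)"

definition density :: "nat \<Rightarrow> complex mat \<Rightarrow> bool" where
  "density d \<rho> \<longleftrightarrow> psd d \<rho> \<and> mtrace \<rho> = 1"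

definition kron :: "complex mat \<Rightarrow> complex mat \<Rightarrow> complex mat" where
  "kron A B = mat (dim_row A * dim_row B) (dim_col A * dim_col B)
     (\<lambda>(i, j). A $$ (i div dim_row B, j div dim_col B) * B $$ (i mod dim_row B, j mod dim_col B))"

definition munit :: "nat \<Rightarrow> nat \<Rightarrow> nat \<Rightarrow> complex mat" where
  "munit d i j = mat d d (\<lambda>(r, c). if r = i \<and> c = j then 1 else 0)"

definition lin_map :: "nat \<Rightarrow> nat \<Rightarrow> (complex mat \<Rightarrow> complex mat) \<Rightarrow> bool" where
  "lin_map d d' E \<longleftrightarrow>
     (\<forall>X \<in> carrier_mat d d. E X \<in> carrier_mat d' d') \<and>
     (\<forall>X \<in> carrier_mat d d. \<forall>Y \<in> carrier_mat d d. \<forall>a b :: complex.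
        E (a \<cdot>\<^sub>m X + b \<cdot>\<^sub>m Y) = a \<cdot>\<^sub>m E X + b \<cdot>\<^sub>m E Y)"

text \<open>Ampliation id_m \<otimes> E acting on (m*d) x (m*d) matrices (block (i,j) is d x d),
  producing an (m*d') x (m*d') matrix whose block (i,j) is E applied to block (i,j).\<close>
definition ampl :: "nat \<Rightarrow> nat \<Rightarrow> nat \<Rightarrow> (complex mat \<Rightarrow> complex mat) \<Rightarrow> complex mat \<Rightarrow> complex mat" where
  "ampl m d d' E X = mat (m * d') (m * d')
     (\<lambda>(r, c). E (mat d d (\<lambda>(a, b). X $$ ((r div d') * d + a, (c div d') * d + b)))
                $$ (r mod d', c mod d'))"

definition cptp :: "nat \<Rightarrow> nat \<Rightarrow> (complex mat \<Rightarrow> complex mat) \<Rightarrow> bool" where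
  "cptp d d' E \<longleftrightarrow> lin_map d d' E \<and>
     (\<forall>m X. psd (m * d) X \<longrightarrow> psd (m * d') (ampl m d d' E X)) \<and>
     (\<forall>X \<in> carrier_mat d d. mtrace (E X) = mtrace X)"

text \<open>Tensor product E1 \<otimes> E2 of linear maps E1: M_d1 -> M_d1', E2: M_d2 -> M_d2',
  defined as the linear extension of (E1 \<otimes> E2)(A \<otimes> B) = E1 A \<otimes> E2 B via matrix units.\<close>
definition tensor_map :: "nat \<Rightarrow> nat \<Rightarrow> nat \<Rightarrow> nat \<Rightarrow>
    (complex mat \<Rightarrow> complex mat) \<Rightarrow> (complex mat \<Rightarrow> complex mat) \<Rightarrow> complex mat \<Rightarrow> complex mat" where
  "tensor_map d1 d2 d1' d2' E1 E2 X = mat (d1' * d2') (d1' * d2')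
     (\<lambda>(r, c). \<Sum>i<d1. \<Sum>j<d1. \<Sum>k<d2. \<Sum>l<d2.
        X $$ (i * d2 + k, j * d2 + l) * kron (E1 (munit d1 i j)) (E2 (munit d2 k l)) $$ (r, c))"

definition proj_family :: "nat \<Rightarrow> 'b set \<Rightarrow> ('b \<Rightarrow> complex mat) \<Rightarrow> bool" where
  "proj_family d B P \<longleftrightarrow> finite B \<and>
     (\<forall>b \<in> B. P b \<in> carrier_mat d d \<and> P b * P b = P b \<and> madj (P b) = P b) \<and>
     (\<forall>b \<in> B. \<forall>b' \<in> B. b \<noteq> b' \<longrightarrow> P b * P b' = 0\<^sub>m d d) \<and>
     mat d d (\<lambda>(i, j). \<Sum>b\<in>B. P b $$ (i, j)) = 1\<^sub>m d"

text \<open>Times t_0..t_n; Hilbert space dimension d k at time t_k; initial state rho on C^(d 0);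
  E j (j = 1..n) is the channel E_{t_j <- t_{j-1}}; P k b are projectors at t_k, outcomes B k.\<close>
definition mt_process :: "nat \<Rightarrow> (nat \<Rightarrow> nat) \<Rightarrow> complex mat \<Rightarrow> (nat \<Rightarrow> complex mat \<Rightarrow> complex mat)
    \<Rightarrow> (nat \<Rightarrow> 'b set) \<Rightarrow> (nat \<Rightarrow> 'b \<Rightarrow> complex mat) \<Rightarrow> bool" where
  "mt_process n d \<rho> E B P \<longleftrightarrow> density (d 0) \<rho> \<and>
     (\<forall>j \<in> {1..n}. cptp (d (j - 1)) (d j) (E j)) \<and>
     (\<forall>k \<le> n. proj_family (d k) (B k) (P k))"

definition outcomes :: "nat \<Rightarrow> (nat \<Rightarrow> 'b set) \<Rightarrow> (nat \<Rightarrow> 'b) set" where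
  "outcomes n B = PiE {..n} B"

fun kd_right_st :: "complex mat \<Rightarrow> (nat \<Rightarrow> complex mat \<Rightarrow> complex mat) \<Rightarrow> (nat \<Rightarrow> 'b \<Rightarrow> complex mat)
    \<Rightarrow> (nat \<Rightarrow> 'b) \<Rightarrow> nat \<Rightarrow> complex mat" where
  "kd_right_st \<rho> E P b 0 = \<rho> * P 0 (b 0)"
| "kd_right_st \<rho> E P b (Suc k) = E (Suc k) (kd_right_st \<rho> E P b k) * P (Suc k) (b (Suc k))"

definition QKD_right where
  "QKD_right n \<rho> E P b = mtrace (kd_right_st \<rho> E P b n)"

fun kd_left_st :: "complex mat \<Rightarrow> (nat \<Rightarrow> complex mat \<Rightarrow> complex mat) \<Rightarrow> (nat \<Rightarrow> 'b \<Rightarrow> complex mat)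
    \<Rightarrow> (nat \<Rightarrow> 'b) \<Rightarrow> nat \<Rightarrow> complex mat" where
  "kd_left_st \<rho> E P a 0 = P 0 (a 0) * \<rho>"
| "kd_left_st \<rho> E P a (Suc k) = P (Suc k) (a (Suc k)) * E (Suc k) (kd_left_st \<rho> E P a k)"

definition QKD_left where
  "QKD_left n \<rho> E P a = mtrace (kd_left_st \<rho> E P a n)"

fun kd_both_st :: "complex mat \<Rightarrow> (nat \<Rightarrow> complex mat \<Rightarrow> complex mat) \<Rightarrow> (nat \<Rightarrow> 'b \<Rightarrow> complex mat)
    \<Rightarrow> (nat \<Rightarrow> 'b) \<Rightarrow> (nat \<Rightarrow> 'b) \<Rightarrow> nat \<Rightarrow> complex mat" where
  "kd_both_st \<rho> E P a b 0 = P 0 (a 0) * \<rho> * P 0 (b 0)"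
| "kd_both_st \<rho> E P a b (Suc k) =
     P (Suc k) (a (Suc k)) * E (Suc k) (kd_both_st \<rho> E P a b k) * P (Suc k) (b (Suc k))"

definition QKD_both where
  "QKD_both n \<rho> E P ab = mtrace (kd_both_st \<rho> E P (fst ab) (snd ab) n)"

definition negN :: "('x \<Rightarrow> complex) \<Rightarrow> 'x set \<Rightarrow> real" where
  "negN Q S = (\<Sum>x\<in>S. cmod (Q x)) - 1"

definition logN :: "('x \<Rightarrow> complex) \<Rightarrow> 'x set \<Rightarrow> real" where
  "logN Q S = ln (\<Sum>x\<in>S. cmod (Q x))"

definition prod_E :: "(nat \<Rightarrow> nat) \<Rightarrow> (nat \<Rightarrow> nat) \<Rightarrow> (nat \<Rightarrow> complex mat \<Rightarrow> complex mat)
    \<Rightarrow> (nat \<Rightarrow> complex mat \<Rightarrow> complex mat) \<Rightarrow> nat \<Rightarrow> complex mat \<Rightarrow> complex mat" where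
  "prod_E d1 d2 E1 E2 j = tensor_map (d1 (j - 1)) (d2 (j - 1)) (d1 j) (d2 j) (E1 j) (E2 j)"

definition prod_P :: "(nat \<Rightarrow> 'b \<Rightarrow> complex mat) \<Rightarrow> (nat \<Rightarrow> 'c \<Rightarrow> complex mat)
    \<Rightarrow> nat \<Rightarrow> 'b \<times> 'c \<Rightarrow> complex mat" where
  "prod_P P1 P2 k bc = kron (P1 k (fst bc)) (P2 k (snd bc))"

definition prod_B :: "(nat \<Rightarrow> 'b set) \<Rightarrow> (nat \<Rightarrow> 'c set) \<Rightarrow> nat \<Rightarrow> ('b \<times> 'c) set" where
  "prod_B B1 B2 k = B1 k \<times> B2 k"

end

theory Submission
  imports Defs
begin

lemma idx_bound: "i < a \<Longrightarrow> j < (b::nat) \<Longrightarrow> i*b+j < a*b"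
proof -
  assume i: "i < a" and j: "j < b"
  have "i*b+j < (i+1)*b" using j by simp
  also have "\<dots> \<le> a*b" by (rule mult_le_mono1) (use i in simp)
  finally show ?thesis .
qed

lemma sum_divmod:
  fixes f :: "nat \<Rightarrow> 'a::comm_monoid_add"
  shows "(\<Sum>s<a*b. f s) = (\<Sum>i<a. \<Sum>j<b. f (i*b+j))"
proof -
  have "(\<Sum>s<a*b. f s) = (\<Sum>p\<in>{..<a}\<times>{..<b}. f (fst p * b + snd p))"
  proof (rule sum.reindex_bij_witness[where i="\<lambda>p. fst p * b + snd p" and j="\<lambda>s. (s div b, s mod b)"])
    fix s assume "s \<in> {..<a*b}"
    then show "(s div b, s mod b) \<in> {..<a}\<times>{..<b}"
      by (auto simp: less_mult_imp_div_less) (metis mod_less_divisor mult_0_right not_gr_zero not_less_zero)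
  next
    fix p assume p: "p \<in> {..<a}\<times>{..<b}"
    then have "fst p * b + snd p < a * b"
      by (auto intro: idx_bound)
    then show "fst p * b + snd p \<in> {..<a*b}" by simp
  qed auto
  also have "\<dots> = (\<Sum>i<a. \<Sum>j<b. f (i*b+j))"
    by (simp add: sum.cartesian_product')
  finally show ?thesis .
qed

definition msum :: "nat \<Rightarrow> 'x set \<Rightarrow> ('x \<Rightarrow> complex mat) \<Rightarrow> complex mat" where
  "msum d S f = mat d d (\<lambda>(r,c). \<Sum>s\<in>S. f s $$ (r,c))"

lemma msum_carrier[simp]: "msum d S f \<in> carrier_mat d d"
  by (simp add: msum_def)
lemma msum_dim[simp]: "dim_row (msum d S f) = d" "dim_col (msum d S f) = d"
  by (simp_all add: msum_def)
lemma msum_index[simp]: "i < d \<Longrightarrow> j < d \<Longrightarrow> msum d S f $$ (i,j) = (\<Sum>s\<in>S. f s $$ (i,j))"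
  by (simp add: msum_def)

lemma mult_index_sum: "A \<in> carrier_mat d d \<Longrightarrow> C \<in> carrier_mat d d \<Longrightarrow> i < d \<Longrightarrow> j < d \<Longrightarrow>
   (A * C) $$ (i,j) = (\<Sum>k<d. A $$ (i,k) * C $$ (k,j))"
  by (simp add: scalar_prod_def row_def col_def atLeast0LessThan)

lemma msum_mult_right:
  assumes "\<And>s. s \<in> S \<Longrightarrow> f s \<in> carrier_mat d d" "C \<in> carrier_mat d d"
  shows "msum d S (\<lambda>s. f s * C) = msum d S f * C"
proof (rule eq_matI)
  fix i j assume ij: "i < dim_row (msum d S f * C)" "j < dim_col (msum d S f * C)"
  then have i: "i < d" and j: "j < d" using assms by auto
  have "msum d S (\<lambda>s. f s * C) $$ (i,j) = (\<Sum>s\<in>S. \<Sum>k<d. f s $$ (i,k) * C $$ (k,j))"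
    using i j assms by (auto intro!: sum.cong simp: mult_index_sum)
  also have "\<dots> = (\<Sum>k<d. (\<Sum>s\<in>S. f s $$ (i,k)) * C $$ (k,j))"
    by (subst sum.swap) (simp add: sum_distrib_right)
  also have "\<dots> = (msum d S f * C) $$ (i,j)"
    using i j assms by (simp add: mult_index_sum[OF msum_carrier assms(2) i j])
  finally show "msum d S (\<lambda>s. f s * C) $$ (i,j) = (msum d S f * C) $$ (i,j)" .
qed (use assms in auto)

lemma msum_mult_left:
  assumes "\<And>s. s \<in> S \<Longrightarrow> f s \<in> carrier_mat d d" "C \<in> carrier_mat d d"
  shows "msum d S (\<lambda>s. C * f s) = C * msum d S f"
proof (rule eq_matI)
  fix i j assume ij: "i < dim_row (C * msum d S f)" "j < dim_col (C * msum d S f)"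
  then have i: "i < d" and j: "j < d" using assms by auto
  have "msum d S (\<lambda>s. C * f s) $$ (i,j) = (\<Sum>s\<in>S. \<Sum>k<d. C $$ (i,k) * f s $$ (k,j))"
    using i j assms by (auto intro!: sum.cong simp: mult_index_sum)
  also have "\<dots> = (\<Sum>k<d. C $$ (i,k) * (\<Sum>s\<in>S. f s $$ (k,j)))"
    by (subst sum.swap) (simp add: sum_distrib_left)
  also have "\<dots> = (C * msum d S f) $$ (i,j)"
    using i j assms by (simp add: mult_index_sum[OF assms(2) msum_carrier i j])
  finally show "msum d S (\<lambda>s. C * f s) $$ (i,j) = (C * msum d S f) $$ (i,j)" .
qed (use assms in auto)

lemma msum_cong: "(\<And>s. s \<in> S \<Longrightarrow> f s = g s) \<Longrightarrow> msum d S f = msum d S g"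
  unfolding msum_def by (auto intro!: cong_mat sum.cong)

lemma msum_prod: "msum d (A \<times> B) f = msum d A (\<lambda>a. msum d B (\<lambda>b. f (a,b)))"
  unfolding msum_def by (rule eq_matI) (auto simp: sum.cartesian_product)

lemma msum_reindex: "inj_on h S \<Longrightarrow> msum d (h ` S) f = msum d S (f \<circ> h)"
  unfolding msum_def by (auto intro!: cong_mat simp: sum.reindex)

lemma msum_empty: "msum d {} f = 0\<^sub>m d d"
  unfolding msum_def by auto

lemma msum_insert: "finite S \<Longrightarrow> x \<notin> S \<Longrightarrow> f x \<in> carrier_mat d d \<Longrightarrow>
   msum d (insert x S) f = 1 \<cdot>\<^sub>m msum d S f + 1 \<cdot>\<^sub>m f x"
  unfolding msum_def by (rule eq_matI) auto

lemma lin_zero: "lin_map d d' E \<Longrightarrow> E (0\<^sub>m d d) = 0\<^sub>m d' d'"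
proof -
  assume L: "lin_map d d' E"
  have z: "0\<^sub>m d d \<in> carrier_mat d d" by simp
  have "E (0\<^sub>m d d) = E (0 \<cdot>\<^sub>m 0\<^sub>m d d + 0 \<cdot>\<^sub>m 0\<^sub>m d d)" by (rule arg_cong[of _ _ E]) auto
  also have "\<dots> = 0 \<cdot>\<^sub>m E (0\<^sub>m d d) + 0 \<cdot>\<^sub>m E (0\<^sub>m d d)"
    using L z unfolding lin_map_def by blast
  also have "\<dots> = 0\<^sub>m d' d'"
  proof -
    have c: "E (0\<^sub>m d d) \<in> carrier_mat d' d'" using L z unfolding lin_map_def by blast
    show ?thesis by (rule eq_matI) (use c in auto)
  qed
  finally show ?thesis .
qed

lemma lin_msum:
  assumes L: "lin_map d d' E" and fin: "finite S" and c: "\<And>s. s \<in> S \<Longrightarrow> f s \<in> carrier_mat d d"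
  shows "E (msum d S f) = msum d' S (\<lambda>s. E (f s))"
  using fin c
proof (induction S rule: finite_induct)
  case empty
  then show ?case using lin_zero[OF L] by (simp add: msum_empty)
next
  case (insert x S)
  have cx: "f x \<in> carrier_mat d d" and cE: "E (f x) \<in> carrier_mat d' d'"
    using insert L unfolding lin_map_def by auto
  have "E (msum d (insert x S) f) = E (1 \<cdot>\<^sub>m msum d S f + 1 \<cdot>\<^sub>m f x)"
    using insert cx by (simp add: msum_insert)
  also have "\<dots> = 1 \<cdot>\<^sub>m E (msum d S f) + 1 \<cdot>\<^sub>m E (f x)"
    using L cx unfolding lin_map_def by (meson msum_carrier)
  also have "\<dots> = msum d' (insert x S) (\<lambda>s. E (f s))"
    using insert cE by (simp add: msum_insert)
  finally show ?case .
qed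

lemma mtrace_msum: "(\<And>s. s \<in> S \<Longrightarrow> f s \<in> carrier_mat d d) \<Longrightarrow> mtrace (msum d S f) = (\<Sum>s\<in>S. mtrace (f s))"
proof -
  assume c: "\<And>s. s \<in> S \<Longrightarrow> f s \<in> carrier_mat d d"
  have "(\<Sum>s\<in>S. mtrace (f s)) = (\<Sum>s\<in>S. \<Sum>i<d. f s $$ (i,i))"
    unfolding mtrace_def using c by (intro sum.cong) auto
  also have "\<dots> = (\<Sum>i<d. \<Sum>s\<in>S. f s $$ (i,i))" by (rule sum.swap)
  also have "\<dots> = mtrace (msum d S f)" unfolding mtrace_def by simp
  finally show ?thesis by simp
qed


lemma kron_carrier[simp]: "A \<in> carrier_mat a a \<Longrightarrow> B \<in> carrier_mat b b \<Longrightarrow> kron A B \<in> carrier_mat (a*b) (a*b)"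
  by (simp add: kron_def)

lemma kron_dim[simp]: "dim_row (kron A B) = dim_row A * dim_row B" "dim_col (kron A B) = dim_col A * dim_col B"
  by (simp_all add: kron_def)

lemma kron_index: "A \<in> carrier_mat a a \<Longrightarrow> B \<in> carrier_mat b b \<Longrightarrow> i < a*b \<Longrightarrow> j < a*b \<Longrightarrow>
  kron A B $$ (i,j) = A $$ (i div b, j div b) * B $$ (i mod b, j mod b)"
  by (simp add: kron_def)

lemma divmod_bound: "i < a*b \<Longrightarrow> i div b < a \<and> i mod b < (b::nat)"
proof -
  assume h: "i < a*b"
  have b: "b > 0" using h by (cases b) auto
  show ?thesis using less_mult_imp_div_less[OF h] mod_less_divisor[OF b] by simp
qed

lemma mult_div_simps: "j < (b::nat) \<Longrightarrow> (i*b+j) div b = i \<and> (i*b+j) mod b = j"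
proof -
  assume j: "j < b"
  then have b: "b > 0" by simp
  have "(i*b+j) div b = i + j div b" using b by simp
  moreover have "(i*b+j) mod b = j mod b" by simp
  ultimately show ?thesis using j by simp
qed

lemma kron_mult:
  assumes A1: "A1 \<in> carrier_mat a a" and B1: "B1 \<in> carrier_mat a a"
    and A2: "A2 \<in> carrier_mat b b" and B2: "B2 \<in> carrier_mat b b"
  shows "kron A1 A2 * kron B1 B2 = kron (A1 * B1) (A2 * B2)"
proof (rule eq_matI)
  fix r c assume "r < dim_row (kron (A1 * B1) (A2 * B2))" "c < dim_col (kron (A1 * B1) (A2 * B2))"
  then have r: "r < a*b" and c: "c < a*b" using assms by auto
  have "(kron A1 A2 * kron B1 B2) $$ (r,c) = (\<Sum>s<a*b. kron A1 A2 $$ (r,s) * kron B1 B2 $$ (s,c))"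
    by (rule mult_index_sum[OF kron_carrier[OF A1 A2] kron_carrier[OF B1 B2] r c])
  also have "\<dots> = (\<Sum>i<a. \<Sum>j<b. kron A1 A2 $$ (r,i*b+j) * kron B1 B2 $$ (i*b+j,c))"
    by (rule sum_divmod)
  also have "\<dots> = (\<Sum>i<a. \<Sum>j<b. (A1 $$ (r div b, i) * B1 $$ (i, c div b)) * (A2 $$ (r mod b, j) * B2 $$ (j, c mod b)))"
  proof (intro sum.cong refl)
    fix i j assume i: "i \<in> {..<a}" and j: "j \<in> {..<b}"
    then have s: "i*b+j < a*b"
      by (auto intro: idx_bound)
    show "kron A1 A2 $$ (r,i*b+j) * kron B1 B2 $$ (i*b+j,c) =
      (A1 $$ (r div b, i) * B1 $$ (i, c div b)) * (A2 $$ (r mod b, j) * B2 $$ (j, c mod b))"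
      using j by (simp add: kron_index[OF A1 A2 r s] kron_index[OF B1 B2 s c] mult_div_simps)
  qed
  also have "\<dots> = (\<Sum>i<a. A1 $$ (r div b, i) * B1 $$ (i, c div b)) * (\<Sum>j<b. A2 $$ (r mod b, j) * B2 $$ (j, c mod b))"
    by (simp add: sum_product)
  also have "\<dots> = kron (A1 * B1) (A2 * B2) $$ (r,c)"
    using divmod_bound[OF r] divmod_bound[OF c]
    by (simp add: kron_index[OF mult_carrier_mat[OF A1 B1] mult_carrier_mat[OF A2 B2] r c] mult_index_sum[OF A1 B1] mult_index_sum[OF A2 B2])
  finally show "(kron A1 A2 * kron B1 B2) $$ (r,c) = kron (A1 * B1) (A2 * B2) $$ (r,c)" .
qed (use assms in auto)

lemma mtrace_kron:
  assumes A: "A \<in> carrier_mat a a" and B: "B \<in> carrier_mat b b"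
  shows "mtrace (kron A B) = mtrace A * mtrace B"
proof -
  have "mtrace (kron A B) = (\<Sum>s<a*b. kron A B $$ (s,s))" unfolding mtrace_def using A B by (simp del: kron_carrier)
  also have "\<dots> = (\<Sum>i<a. \<Sum>j<b. kron A B $$ (i*b+j,i*b+j))" by (rule sum_divmod)
  also have "\<dots> = (\<Sum>i<a. \<Sum>j<b. A $$ (i,i) * B $$ (j,j))"
  proof (intro sum.cong refl)
    fix i j assume i: "i \<in> {..<a}" and j: "j \<in> {..<b}"
    then have s: "i*b+j < a*b"
      by (auto intro: idx_bound)
    show "kron A B $$ (i*b+j,i*b+j) = A $$ (i,i) * B $$ (j,j)"
      using j by (simp add: kron_index[OF A B s s] mult_div_simps)
  qed
  also have "\<dots> = mtrace A * mtrace B" unfolding mtrace_def using A B by (simp add: sum_product)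
  finally show ?thesis .
qed

lemma lin_smult: "lin_map d d' E \<Longrightarrow> M \<in> carrier_mat d d \<Longrightarrow> E (a \<cdot>\<^sub>m M) = a \<cdot>\<^sub>m E M"
proof -
  assume L: "lin_map d d' E" and M: "M \<in> carrier_mat d d"
  have c: "E M \<in> carrier_mat d' d'" using L M unfolding lin_map_def by blast
  have "E (a \<cdot>\<^sub>m M) = E (a \<cdot>\<^sub>m M + 0 \<cdot>\<^sub>m M)" by (rule arg_cong[of _ _ E]) (use M in auto)
  also have "\<dots> = a \<cdot>\<^sub>m E M + 0 \<cdot>\<^sub>m E M" using L M unfolding lin_map_def by blast
  also have "\<dots> = a \<cdot>\<^sub>m E M" by (rule eq_matI) (use c in auto)
  finally show ?thesis .
qed

lemma munit_decomp: "X \<in> carrier_mat d d \<Longrightarrow>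
  X = msum d ({..<d}\<times>{..<d}) (\<lambda>p. X $$ p \<cdot>\<^sub>m munit d (fst p) (snd p))"
proof (rule eq_matI)
  fix r c assume X: "X \<in> carrier_mat d d" and rc: "r < dim_row (msum d ({..<d}\<times>{..<d}) (\<lambda>p. X $$ p \<cdot>\<^sub>m munit d (fst p) (snd p)))"
    "c < dim_col (msum d ({..<d}\<times>{..<d}) (\<lambda>p. X $$ p \<cdot>\<^sub>m munit d (fst p) (snd p)))"
  then have r: "r < d" and c: "c < d" by auto
  have "msum d ({..<d}\<times>{..<d}) (\<lambda>p. X $$ p \<cdot>\<^sub>m munit d (fst p) (snd p)) $$ (r,c)
     = (\<Sum>p\<in>{..<d}\<times>{..<d}. if p = (r,c) then X $$ (r,c) else 0)"
    using r c by (intro trans[OF msum_index sum.cong]) (auto simp: munit_def)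
  also have "\<dots> = X $$ (r,c)" using r c by (simp add: sum.delta)
  finally show "X $$ (r,c) = msum d ({..<d}\<times>{..<d}) (\<lambda>p. X $$ p \<cdot>\<^sub>m munit d (fst p) (snd p)) $$ (r,c)" by simp
qed auto

lemma munit_carrier[simp]: "munit d i j \<in> carrier_mat d d" by (simp add: munit_def)

lemma lin_expand:
  assumes L: "lin_map d d' E" and X: "X \<in> carrier_mat d d" and p: "p < d'" and q: "q < d'"
  shows "E X $$ (p,q) = (\<Sum>i<d. \<Sum>j<d. X $$ (i,j) * E (munit d i j) $$ (p,q))"
proof -
  have "E X = E (msum d ({..<d}\<times>{..<d}) (\<lambda>p. X $$ p \<cdot>\<^sub>m munit d (fst p) (snd p)))"
    using munit_decomp[OF X] by simp
  also have "\<dots> = msum d' ({..<d}\<times>{..<d}) (\<lambda>p. E (X $$ p \<cdot>\<^sub>m munit d (fst p) (snd p)))"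
    by (rule lin_msum[OF L]) auto
  also have "\<dots> = msum d' ({..<d}\<times>{..<d}) (\<lambda>p. X $$ p \<cdot>\<^sub>m E (munit d (fst p) (snd p)))"
    by (rule msum_cong) (simp add: lin_smult[OF L])
  finally have "E X $$ (p,q) = (\<Sum>x\<in>{..<d}\<times>{..<d}. (X $$ x \<cdot>\<^sub>m E (munit d (fst x) (snd x))) $$ (p, q))"
    using p q by simp
  also have "\<dots> = (\<Sum>x\<in>{..<d}\<times>{..<d}. X $$ x * E (munit d (fst x) (snd x)) $$ (p, q))"
  proof (intro sum.cong refl)
    fix x assume "x \<in> {..<d}\<times>{..<d}"
    have "E (munit d (fst x) (snd x)) \<in> carrier_mat d' d'" using L unfolding lin_map_def by simp
    then show "(X $$ x \<cdot>\<^sub>m E (munit d (fst x) (snd x))) $$ (p, q) = X $$ x * E (munit d (fst x) (snd x)) $$ (p, q)"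
      using p q by simp
  qed
  also have "\<dots> = (\<Sum>i<d. \<Sum>j<d. X $$ (i,j) * E (munit d i j) $$ (p,q))"
    by (simp add: sum.cartesian_product')
  finally show ?thesis .
qed

lemma tensor_kron:
  assumes L1: "lin_map d1 d1' E1" and L2: "lin_map d2 d2' E2"
    and X: "X \<in> carrier_mat d1 d1" and Y: "Y \<in> carrier_mat d2 d2"
  shows "tensor_map d1 d2 d1' d2' E1 E2 (kron X Y) = kron (E1 X) (E2 Y)"
proof -
  have cE1: "\<And>M. M \<in> carrier_mat d1 d1 \<Longrightarrow> E1 M \<in> carrier_mat d1' d1'" using L1 unfolding lin_map_def by blast
  have cE2: "\<And>M. M \<in> carrier_mat d2 d2 \<Longrightarrow> E2 M \<in> carrier_mat d2' d2'" using L2 unfolding lin_map_def by blast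
  show ?thesis
proof (rule eq_matI)
  fix r c assume "r < dim_row (kron (E1 X) (E2 Y))" "c < dim_col (kron (E1 X) (E2 Y))"
  then have r: "r < d1'*d2'" and c: "c < d1'*d2'" using cE1[OF X] cE2[OF Y] by (auto simp: kron_def)
  note br = divmod_bound[OF r] and bc = divmod_bound[OF c]
  have "tensor_map d1 d2 d1' d2' E1 E2 (kron X Y) $$ (r,c) =
    (\<Sum>i<d1. \<Sum>j<d1. \<Sum>k<d2. \<Sum>l<d2. (X $$ (i,j) * E1 (munit d1 i j) $$ (r div d2', c div d2')) *
        (Y $$ (k,l) * E2 (munit d2 k l) $$ (r mod d2', c mod d2')))"
  proof -
    have pt: "kron X Y $$ (i * d2 + k, j * d2 + l) * kron (E1 (munit d1 i j)) (E2 (munit d2 k l)) $$ (r, c) =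
       (X $$ (i,j) * E1 (munit d1 i j) $$ (r div d2', c div d2')) *
        (Y $$ (k,l) * E2 (munit d2 k l) $$ (r mod d2', c mod d2'))"
      if i: "i < d1" and j: "j < d1" and k: "k < d2" and l: "l < d2" for i j k l
    proof -
      have s1: "i*d2+k < d1*d2" and s2: "j*d2+l < d1*d2" using i j k l by (auto intro: idx_bound)
      have e1: "kron X Y $$ (i*d2+k, j*d2+l) = X $$ (i,j) * Y $$ (k,l)"
        using kron_index[OF X Y s1 s2] conjunct1[OF mult_div_simps[OF k, of i]] conjunct2[OF mult_div_simps[OF k, of i]]
          conjunct1[OF mult_div_simps[OF l, of j]] conjunct2[OF mult_div_simps[OF l, of j]]
        by (simp only:)
      have e2: "kron (E1 (munit d1 i j)) (E2 (munit d2 k l)) $$ (r, c) =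
          E1 (munit d1 i j) $$ (r div d2', c div d2') * E2 (munit d2 k l) $$ (r mod d2', c mod d2')"
        by (rule kron_index[OF cE1[OF munit_carrier] cE2[OF munit_carrier] r c])
      show ?thesis unfolding e1 e2 by (simp only: mult_ac)
    qed
    have "tensor_map d1 d2 d1' d2' E1 E2 (kron X Y) $$ (r,c) =
      (\<Sum>i<d1. \<Sum>j<d1. \<Sum>k<d2. \<Sum>l<d2. kron X Y $$ (i * d2 + k, j * d2 + l) * kron (E1 (munit d1 i j)) (E2 (munit d2 k l)) $$ (r, c))"
      unfolding tensor_map_def using r c by simp
    also have "\<dots> = (\<Sum>i<d1. \<Sum>j<d1. \<Sum>k<d2. \<Sum>l<d2. (X $$ (i,j) * E1 (munit d1 i j) $$ (r div d2', c div d2')) *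
        (Y $$ (k,l) * E2 (munit d2 k l) $$ (r mod d2', c mod d2')))"
      by (simp add: pt)
    finally show ?thesis .
  qed
  also have "\<dots> = (\<Sum>i<d1. \<Sum>j<d1. (X $$ (i,j) * E1 (munit d1 i j) $$ (r div d2', c div d2')) *
      (\<Sum>k<d2. \<Sum>l<d2. Y $$ (k,l) * E2 (munit d2 k l) $$ (r mod d2', c mod d2')))"
    by (simp only: sum_distrib_left)
  also have "\<dots> = (\<Sum>i<d1. \<Sum>j<d1. X $$ (i,j) * E1 (munit d1 i j) $$ (r div d2', c div d2')) *
      (\<Sum>k<d2. \<Sum>l<d2. Y $$ (k,l) * E2 (munit d2 k l) $$ (r mod d2', c mod d2'))"
    by (simp only: sum_distrib_right)
  also have "\<dots> = kron (E1 X) (E2 Y) $$ (r,c)"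
    using br bc by (simp add: kron_index[OF cE1[OF X] cE2[OF Y] r c] lin_expand[OF L1 X] lin_expand[OF L2 Y])
  finally show "tensor_map d1 d2 d1' d2' E1 E2 (kron X Y) $$ (r,c) = kron (E1 X) (E2 Y) $$ (r,c)" .
next
  show "dim_row (tensor_map d1 d2 d1' d2' E1 E2 (kron X Y)) = dim_row (kron (E1 X) (E2 Y))"
    using carrier_matD[OF cE1[OF X]] carrier_matD[OF cE2[OF Y]] by (simp add: tensor_map_def)
next
  show "dim_col (tensor_map d1 d2 d1' d2' E1 E2 (kron X Y)) = dim_col (kron (E1 X) (E2 Y))"
    using carrier_matD[OF cE1[OF X]] carrier_matD[OF cE2[OF Y]] by (simp add: tensor_map_def)
qed
qed


lemma msum_single: "f x \<in> carrier_mat d d \<Longrightarrow> msum d {x} f = f x"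
  unfolding msum_def by (rule eq_matI) auto

lemma msum_PiE_insert:
  assumes "x \<notin> S"
  shows "msum d (PiE (insert x S) B) F = msum d (B x) (\<lambda>y. msum d (PiE S B) (\<lambda>g. F (g(x:=y))))"
proof -
  have "msum d (PiE (insert x S) B) F = msum d ((\<lambda>(y, g). g(x := y)) ` (B x \<times> PiE S B)) F"
    by (simp add: PiE_insert_eq)
  also have "\<dots> = msum d (B x \<times> PiE S B) (F \<circ> (\<lambda>(y, g). g(x := y)))"
    by (rule msum_reindex[OF inj_combinator[OF assms]])
  also have "\<dots> = msum d (B x) (\<lambda>y. msum d (PiE S B) (\<lambda>g. F (g(x:=y))))"
    by (simp add: msum_prod)
  finally show ?thesis .
qed

lemma lin_id: "lin_map d d (\<lambda>X. X)"
  unfolding lin_map_def by auto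

lemma step_right:
  assumes L: "lin_map d' d E" and fY: "finite Y" and cP: "\<And>y. y \<in> Y \<Longrightarrow> P y \<in> carrier_mat d d"
    and one: "msum d Y P = 1\<^sub>m d" and fS: "finite S" and cf: "\<And>s. s \<in> S \<Longrightarrow> f s \<in> carrier_mat d' d'"
  shows "msum d Y (\<lambda>y. msum d S (\<lambda>s. E (f s) * P y)) = E (msum d' S f)"
proof -
  have cE: "\<And>s. s \<in> S \<Longrightarrow> E (f s) \<in> carrier_mat d d" using L cf unfolding lin_map_def by blast
  have "msum d' S f \<in> carrier_mat d' d'" by simp
  then have cM: "E (msum d' S f) \<in> carrier_mat d d" using L unfolding lin_map_def by blast
  have "msum d Y (\<lambda>y. msum d S (\<lambda>s. E (f s) * P y)) = msum d Y (\<lambda>y. msum d S (\<lambda>s. E (f s)) * P y)"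
    by (rule msum_cong, rule msum_mult_right) (use cE cP in auto)
  also have "\<dots> = msum d Y (\<lambda>y. E (msum d' S f) * P y)"
    by (simp add: lin_msum[OF L fS cf])
  also have "\<dots> = E (msum d' S f) * msum d Y P"
    by (rule msum_mult_left) (use cP cM in auto)
  also have "\<dots> = E (msum d' S f)" using one cM by simp
  finally show ?thesis .
qed

lemma step_left:
  assumes L: "lin_map d' d E" and fY: "finite Y" and cP: "\<And>y. y \<in> Y \<Longrightarrow> P y \<in> carrier_mat d d"
    and one: "msum d Y P = 1\<^sub>m d" and fS: "finite S" and cf: "\<And>s. s \<in> S \<Longrightarrow> f s \<in> carrier_mat d' d'"
  shows "msum d Y (\<lambda>y. msum d S (\<lambda>s. P y * E (f s))) = E (msum d' S f)"
proof -
  have cE: "\<And>s. s \<in> S \<Longrightarrow> E (f s) \<in> carrier_mat d d" using L cf unfolding lin_map_def by blast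
  have "msum d' S f \<in> carrier_mat d' d'" by simp
  then have cM: "E (msum d' S f) \<in> carrier_mat d d" using L unfolding lin_map_def by blast
  have "msum d Y (\<lambda>y. msum d S (\<lambda>s. P y * E (f s))) = msum d Y (\<lambda>y. P y * msum d S (\<lambda>s. E (f s)))"
    by (rule msum_cong, rule msum_mult_left) (use cE cP in auto)
  also have "\<dots> = msum d Y (\<lambda>y. P y * E (msum d' S f))"
    by (simp add: lin_msum[OF L fS cf])
  also have "\<dots> = msum d Y P * E (msum d' S f)"
    by (rule msum_mult_right) (use cP cM in auto)
  also have "\<dots> = E (msum d' S f)" using one cM by simp
  finally show ?thesis .
qed

lemma step_both:
  assumes L: "lin_map d' d E" and fY: "finite Y" and cP: "\<And>y. y \<in> Y \<Longrightarrow> P y \<in> carrier_mat d d"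
    and one: "msum d Y P = 1\<^sub>m d" and fS: "finite S" and fT: "finite T"
    and cf: "\<And>s t. s \<in> S \<Longrightarrow> t \<in> T \<Longrightarrow> f s t \<in> carrier_mat d' d'"
  shows "msum d Y (\<lambda>y. msum d S (\<lambda>a. msum d Y (\<lambda>z. msum d T (\<lambda>b. P y * E (f a b) * P z))))
       = E (msum d' S (\<lambda>a. msum d' T (\<lambda>b. f a b)))"
proof -
  have inner: "msum d Y (\<lambda>z. msum d T (\<lambda>b. P y * E (f a b) * P z)) = P y * E (msum d' T (f a))"
    if y: "y \<in> Y" and a: "a \<in> S" for y a
  proof -
    have cE: "E (f a b) \<in> carrier_mat d d" if "b \<in> T" for b
      using cf[OF a that] L unfolding lin_map_def by blast
    have cPE: "P y * E (f a b) \<in> carrier_mat d d" if "b \<in> T" for b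
      using mult_carrier_mat[OF cP[OF y] cE[OF that]] .
    have "msum d' T (f a) \<in> carrier_mat d' d'" by simp
    then have cEM: "E (msum d' T (f a)) \<in> carrier_mat d d" using L unfolding lin_map_def by blast
    have cPEM: "P y * E (msum d' T (f a)) \<in> carrier_mat d d" using mult_carrier_mat[OF cP[OF y] cEM] .
    have "msum d Y (\<lambda>z. msum d T (\<lambda>b. P y * E (f a b) * P z)) = msum d Y (\<lambda>z. msum d T (\<lambda>b. (P y * E (f a b))) * P z)"
      by (rule msum_cong, rule msum_mult_right) (use cP cPE in auto)
    also have "\<dots> = msum d Y (\<lambda>z. (P y * msum d T (\<lambda>b. E (f a b))) * P z)"
      by (rule msum_cong, subst msum_mult_left) (use cP y a cf L in \<open>auto simp: lin_map_def\<close>)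
    also have "\<dots> = msum d Y (\<lambda>z. (P y * E (msum d' T (f a))) * P z)"
      using lin_msum[OF L fT, of "f a"] cf a by simp
    also have "\<dots> = (P y * E (msum d' T (f a))) * msum d Y P"
      by (rule msum_mult_left) (use cP cPEM in auto)
    also have "\<dots> = P y * E (msum d' T (f a))" using one right_mult_one_mat[OF cPEM] by simp
    finally show ?thesis .
  qed
  have "msum d Y (\<lambda>y. msum d S (\<lambda>a. msum d Y (\<lambda>z. msum d T (\<lambda>b. P y * E (f a b) * P z))))
     = msum d Y (\<lambda>y. msum d S (\<lambda>a. P y * E (msum d' T (f a))))"
    by (intro msum_cong) (simp add: inner)
  also have "\<dots> = E (msum d' S (\<lambda>a. msum d' T (f a)))"
    by (rule step_left[OF L fY cP one fS]) simp_all
  finally show ?thesis by simp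
qed

fun chan :: "complex mat \<Rightarrow> (nat \<Rightarrow> complex mat \<Rightarrow> complex mat) \<Rightarrow> nat \<Rightarrow> complex mat" where
  "chan \<rho> E 0 = \<rho>"
| "chan \<rho> E (Suc k) = E (Suc k) (chan \<rho> E k)"

lemma mt_rho: "mt_process n d \<rho> E B P \<Longrightarrow> \<rho> \<in> carrier_mat (d 0) (d 0) \<and> mtrace \<rho> = 1"
  by (simp add: mt_process_def density_def psd_def)

lemma mt_E: "mt_process n d \<rho> E B P \<Longrightarrow> Suc k \<le> n \<Longrightarrow>
   lin_map (d k) (d (Suc k)) (E (Suc k)) \<and> (\<forall>X\<in>carrier_mat (d k) (d k). mtrace (E (Suc k) X) = mtrace X)"
proof -
  assume m: "mt_process n d \<rho> E B P" and k: "Suc k \<le> n"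
  then have "Suc k \<in> {1..n}" by simp
  then have "cptp (d (Suc k - 1)) (d (Suc k)) (E (Suc k))" using m unfolding mt_process_def by blast
  then show ?thesis unfolding cptp_def by simp
qed

lemma mt_P: "mt_process n d \<rho> E B P \<Longrightarrow> k \<le> n \<Longrightarrow>
   finite (B k) \<and> (\<forall>b\<in>B k. P k b \<in> carrier_mat (d k) (d k)) \<and> msum (d k) (B k) (P k) = 1\<^sub>m (d k)"
  unfolding mt_process_def proj_family_def msum_def by auto

lemma chan_props: "mt_process n d \<rho> E B P \<Longrightarrow> k \<le> n \<Longrightarrow>
   chan \<rho> E k \<in> carrier_mat (d k) (d k) \<and> mtrace (chan \<rho> E k) = 1"
proof (induction k)
  case 0 then show ?case using mt_rho[OF 0(1)] by simp
next
  case (Suc k)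
  then have IH: "chan \<rho> E k \<in> carrier_mat (d k) (d k) \<and> mtrace (chan \<rho> E k) = 1" by simp
  have E: "lin_map (d k) (d (Suc k)) (E (Suc k)) \<and> (\<forall>X\<in>carrier_mat (d k) (d k). mtrace (E (Suc k) X) = mtrace X)"
    using mt_E Suc.prems by blast
  then show ?case using IH unfolding lin_map_def by auto
qed

lemma right_cong: "(\<And>i. i \<le> k \<Longrightarrow> b i = b' i) \<Longrightarrow> kd_right_st \<rho> E P b k = kd_right_st \<rho> E P b' k"
  by (induction k) auto

lemma left_cong: "(\<And>i. i \<le> k \<Longrightarrow> b i = b' i) \<Longrightarrow> kd_left_st \<rho> E P b k = kd_left_st \<rho> E P b' k"
  by (induction k) auto

lemma both_cong: "(\<And>i. i \<le> k \<Longrightarrow> a i = a' i) \<Longrightarrow> (\<And>i. i \<le> k \<Longrightarrow> b i = b' i) \<Longrightarrow>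
   kd_both_st \<rho> E P a b k = kd_both_st \<rho> E P a' b' k"
  by (induction k) auto

lemma right_carrier: "mt_process n d \<rho> E B P \<Longrightarrow> k \<le> n \<Longrightarrow> (\<And>i. i \<le> k \<Longrightarrow> b i \<in> B i) \<Longrightarrow>
   kd_right_st \<rho> E P b k \<in> carrier_mat (d k) (d k)"
proof (induction k)
  case 0 then show ?case using mt_rho[OF 0(1)] mt_P[OF 0(1), of 0] by auto
next
  case (Suc k)
  have IH: "kd_right_st \<rho> E P b k \<in> carrier_mat (d k) (d k)" using Suc by auto
  have "lin_map (d k) (d (Suc k)) (E (Suc k))" using mt_E Suc.prems by blast
  then have "E (Suc k) (kd_right_st \<rho> E P b k) \<in> carrier_mat (d (Suc k)) (d (Suc k))"
    using IH unfolding lin_map_def by blast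
  moreover have "P (Suc k) (b (Suc k)) \<in> carrier_mat (d (Suc k)) (d (Suc k))"
    using mt_P[OF Suc.prems(1) Suc.prems(2)] Suc.prems(3) by auto
  ultimately show ?case by simp
qed

lemma left_carrier: "mt_process n d \<rho> E B P \<Longrightarrow> k \<le> n \<Longrightarrow> (\<And>i. i \<le> k \<Longrightarrow> b i \<in> B i) \<Longrightarrow>
   kd_left_st \<rho> E P b k \<in> carrier_mat (d k) (d k)"
proof (induction k)
  case 0 then show ?case using mt_rho[OF 0(1)] mt_P[OF 0(1), of 0] by auto
next
  case (Suc k)
  have IH: "kd_left_st \<rho> E P b k \<in> carrier_mat (d k) (d k)" using Suc by auto
  have "lin_map (d k) (d (Suc k)) (E (Suc k))" using mt_E Suc.prems by blast
  then have "E (Suc k) (kd_left_st \<rho> E P b k) \<in> carrier_mat (d (Suc k)) (d (Suc k))"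
    using IH unfolding lin_map_def by blast
  moreover have "P (Suc k) (b (Suc k)) \<in> carrier_mat (d (Suc k)) (d (Suc k))"
    using mt_P[OF Suc.prems(1) Suc.prems(2)] Suc.prems(3) by auto
  ultimately show ?case by simp
qed

lemma both_carrier: "mt_process n d \<rho> E B P \<Longrightarrow> k \<le> n \<Longrightarrow> (\<And>i. i \<le> k \<Longrightarrow> a i \<in> B i) \<Longrightarrow>
   (\<And>i. i \<le> k \<Longrightarrow> b i \<in> B i) \<Longrightarrow> kd_both_st \<rho> E P a b k \<in> carrier_mat (d k) (d k)"
proof (induction k)
  case 0
  have "\<rho> \<in> carrier_mat (d 0) (d 0)" using mt_rho[OF 0(1)] by simp
  moreover have "P 0 (a 0) \<in> carrier_mat (d 0) (d 0)" "P 0 (b 0) \<in> carrier_mat (d 0) (d 0)"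
    using mt_P[OF 0(1), of 0] 0(3,4) by auto
  ultimately show ?case by simp
next
  case (Suc k)
  have IH: "kd_both_st \<rho> E P a b k \<in> carrier_mat (d k) (d k)" using Suc by auto
  have "lin_map (d k) (d (Suc k)) (E (Suc k))" using mt_E Suc.prems by blast
  then have "E (Suc k) (kd_both_st \<rho> E P a b k) \<in> carrier_mat (d (Suc k)) (d (Suc k))"
    using IH unfolding lin_map_def by blast
  moreover have "P (Suc k) (a (Suc k)) \<in> carrier_mat (d (Suc k)) (d (Suc k))"
    "P (Suc k) (b (Suc k)) \<in> carrier_mat (d (Suc k)) (d (Suc k))"
    using mt_P[OF Suc.prems(1) Suc.prems(2)] Suc.prems(3,4) by auto
  ultimately show ?case by simp
qed


lemma PiE_bound: "g \<in> PiE {..k} B \<Longrightarrow> i \<le> k \<Longrightarrow> g i \<in> B i"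
  by (auto simp: PiE_iff)

lemma atMost_Suc_ins: "{..Suc k} = insert (Suc k) {..k}" by auto
lemma atMost_0_ins: "{..0::nat} = insert 0 {}" by auto

lemma mt_finPiE: "mt_process n d \<rho> E B P \<Longrightarrow> k \<le> n \<Longrightarrow> finite (PiE {..k} B)"
proof -
  assume m: "mt_process n d \<rho> E B P" and k: "k \<le> n"
  show ?thesis by (rule finite_PiE) (use mt_P[OF m] k in auto)
qed

lemma right_total: "mt_process n d \<rho> E B P \<Longrightarrow> k \<le> n \<Longrightarrow>
  msum (d k) (PiE {..k} B) (\<lambda>b. kd_right_st \<rho> E P b k) = chan \<rho> E k"
proof (induction k)
  case 0
  have m: "mt_process n d \<rho> E B P" by fact
  note Pf = mt_P[OF m, of 0]
  have cr: "\<rho> \<in> carrier_mat (d 0) (d 0)" using mt_rho[OF m] by simp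
  have "msum (d 0) (PiE {..0} B) (\<lambda>b. kd_right_st \<rho> E P b 0)
      = msum (d 0) (B 0) (\<lambda>y. msum (d 0) (PiE {} B) (\<lambda>g. kd_right_st \<rho> E P (g(0:=y)) 0))"
    unfolding atMost_0_ins by (rule msum_PiE_insert) simp
  also have "\<dots> = msum (d 0) (B 0) (\<lambda>y. msum (d 0) (PiE {} B) (\<lambda>g. \<rho> * P 0 y))"
    by simp
  also have "\<dots> = msum (d 0) (PiE {} B) (\<lambda>g. \<rho>)"
    using step_right[OF lin_id, where Y="B 0" and d="d 0" and P="P 0" and S="PiE {} B" and f="\<lambda>g. \<rho>"] Pf cr by simp
  also have "\<dots> = \<rho>" using cr by (simp add: msum_single)
  finally show ?case by simp
next
  case (Suc k)
  have m: "mt_process n d \<rho> E B P" and k: "Suc k \<le> n" by fact+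
  have IH: "msum (d k) (PiE {..k} B) (\<lambda>b. kd_right_st \<rho> E P b k) = chan \<rho> E k" using Suc by simp
  note Pf = mt_P[OF m k]
  have L: "lin_map (d k) (d (Suc k)) (E (Suc k))" using mt_E[OF m k] by simp
  have cst: "\<And>g. g \<in> PiE {..k} B \<Longrightarrow> kd_right_st \<rho> E P g k \<in> carrier_mat (d k) (d k)"
    using right_carrier[OF m] k PiE_bound by (metis Suc_leD)
  have "msum (d (Suc k)) (PiE {..Suc k} B) (\<lambda>b. kd_right_st \<rho> E P b (Suc k))
      = msum (d (Suc k)) (B (Suc k)) (\<lambda>y. msum (d (Suc k)) (PiE {..k} B) (\<lambda>g. kd_right_st \<rho> E P (g(Suc k:=y)) (Suc k)))"
    unfolding atMost_Suc_ins by (rule msum_PiE_insert) simp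
  also have "\<dots> = msum (d (Suc k)) (B (Suc k)) (\<lambda>y. msum (d (Suc k)) (PiE {..k} B) (\<lambda>g. E (Suc k) (kd_right_st \<rho> E P g k) * P (Suc k) y))"
  proof (intro msum_cong)
    fix y g
    have "kd_right_st \<rho> E P (g(Suc k:=y)) k = kd_right_st \<rho> E P g k" by (rule right_cong) simp
    then show "kd_right_st \<rho> E P (g(Suc k:=y)) (Suc k) = E (Suc k) (kd_right_st \<rho> E P g k) * P (Suc k) y" by simp
  qed
  also have "\<dots> = E (Suc k) (msum (d k) (PiE {..k} B) (\<lambda>g. kd_right_st \<rho> E P g k))"
    by (rule step_right[OF L]) (use Pf cst mt_finPiE[OF m, of k] k in auto)
  also have "\<dots> = chan \<rho> E (Suc k)" using IH by simp
  finally show ?case .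
qed

lemma left_total: "mt_process n d \<rho> E B P \<Longrightarrow> k \<le> n \<Longrightarrow>
  msum (d k) (PiE {..k} B) (\<lambda>b. kd_left_st \<rho> E P b k) = chan \<rho> E k"
proof (induction k)
  case 0
  have m: "mt_process n d \<rho> E B P" by fact
  note Pf = mt_P[OF m, of 0]
  have cr: "\<rho> \<in> carrier_mat (d 0) (d 0)" using mt_rho[OF m] by simp
  have "msum (d 0) (PiE {..0} B) (\<lambda>b. kd_left_st \<rho> E P b 0)
      = msum (d 0) (B 0) (\<lambda>y. msum (d 0) (PiE {} B) (\<lambda>g. kd_left_st \<rho> E P (g(0:=y)) 0))"
    unfolding atMost_0_ins by (rule msum_PiE_insert) simp
  also have "\<dots> = msum (d 0) (B 0) (\<lambda>y. msum (d 0) (PiE {} B) (\<lambda>g. P 0 y * \<rho>))"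
    by simp
  also have "\<dots> = msum (d 0) (PiE {} B) (\<lambda>g. \<rho>)"
    using step_left[OF lin_id, where Y="B 0" and d="d 0" and P="P 0" and S="PiE {} B" and f="\<lambda>g. \<rho>"] Pf cr by simp
  also have "\<dots> = \<rho>" using cr by (simp add: msum_single)
  finally show ?case by simp
next
  case (Suc k)
  have m: "mt_process n d \<rho> E B P" and k: "Suc k \<le> n" by fact+
  have IH: "msum (d k) (PiE {..k} B) (\<lambda>b. kd_left_st \<rho> E P b k) = chan \<rho> E k" using Suc by simp
  note Pf = mt_P[OF m k]
  have L: "lin_map (d k) (d (Suc k)) (E (Suc k))" using mt_E[OF m k] by simp
  have cst: "\<And>g. g \<in> PiE {..k} B \<Longrightarrow> kd_left_st \<rho> E P g k \<in> carrier_mat (d k) (d k)"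
    using left_carrier[OF m] k PiE_bound by (metis Suc_leD)
  have "msum (d (Suc k)) (PiE {..Suc k} B) (\<lambda>b. kd_left_st \<rho> E P b (Suc k))
      = msum (d (Suc k)) (B (Suc k)) (\<lambda>y. msum (d (Suc k)) (PiE {..k} B) (\<lambda>g. kd_left_st \<rho> E P (g(Suc k:=y)) (Suc k)))"
    unfolding atMost_Suc_ins by (rule msum_PiE_insert) simp
  also have "\<dots> = msum (d (Suc k)) (B (Suc k)) (\<lambda>y. msum (d (Suc k)) (PiE {..k} B) (\<lambda>g. P (Suc k) y * E (Suc k) (kd_left_st \<rho> E P g k)))"
  proof (intro msum_cong)
    fix y g
    have "kd_left_st \<rho> E P (g(Suc k:=y)) k = kd_left_st \<rho> E P g k" by (rule left_cong) simp
    then show "kd_left_st \<rho> E P (g(Suc k:=y)) (Suc k) = P (Suc k) y * E (Suc k) (kd_left_st \<rho> E P g k)" by simp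
  qed
  also have "\<dots> = E (Suc k) (msum (d k) (PiE {..k} B) (\<lambda>g. kd_left_st \<rho> E P g k))"
    by (rule step_left[OF L]) (use Pf cst mt_finPiE[OF m, of k] k in auto)
  also have "\<dots> = chan \<rho> E (Suc k)" using IH by simp
  finally show ?case .
qed

lemma both_total: "mt_process n d \<rho> E B P \<Longrightarrow> k \<le> n \<Longrightarrow>
  msum (d k) (PiE {..k} B) (\<lambda>a. msum (d k) (PiE {..k} B) (\<lambda>b. kd_both_st \<rho> E P a b k)) = chan \<rho> E k"
proof (induction k)
  case 0
  have m: "mt_process n d \<rho> E B P" by fact
  note Pf = mt_P[OF m, of 0]
  have cr: "\<rho> \<in> carrier_mat (d 0) (d 0)" using mt_rho[OF m] by simp
  have "msum (d 0) (PiE {..0} B) (\<lambda>a. msum (d 0) (PiE {..0} B) (\<lambda>b. kd_both_st \<rho> E P a b 0))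
      = msum (d 0) (B 0) (\<lambda>y. msum (d 0) (PiE {} B) (\<lambda>a. msum (d 0) (PiE {..0} B) (\<lambda>b. kd_both_st \<rho> E P (a(0:=y)) b 0)))"
    unfolding atMost_0_ins by (rule msum_PiE_insert) simp
  also have "\<dots> = msum (d 0) (B 0) (\<lambda>y. msum (d 0) (PiE {} B) (\<lambda>a. msum (d 0) (B 0) (\<lambda>z. msum (d 0) (PiE {} B) (\<lambda>b. kd_both_st \<rho> E P (a(0:=y)) (b(0:=z)) 0))))"
    unfolding atMost_0_ins by (intro msum_cong msum_PiE_insert) simp
  also have "\<dots> = msum (d 0) (B 0) (\<lambda>y. msum (d 0) (PiE {} B) (\<lambda>a. msum (d 0) (B 0) (\<lambda>z. msum (d 0) (PiE {} B) (\<lambda>b. P 0 y * \<rho> * P 0 z))))"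
    by simp
  also have "\<dots> = msum (d 0) (PiE {} B) (\<lambda>a. msum (d 0) (PiE {} B) (\<lambda>b. \<rho>))"
    using step_both[OF lin_id, where Y="B 0" and d="d 0" and P="P 0" and S="PiE {} B" and T="PiE {} B" and f="\<lambda>a b. \<rho>"] Pf cr by simp
  also have "\<dots> = \<rho>" using cr by (simp add: msum_single)
  finally show ?case by simp
next
  case (Suc k)
  have m: "mt_process n d \<rho> E B P" and k: "Suc k \<le> n" by fact+
  have IH: "msum (d k) (PiE {..k} B) (\<lambda>a. msum (d k) (PiE {..k} B) (\<lambda>b. kd_both_st \<rho> E P a b k)) = chan \<rho> E k"
    using Suc by simp
  note Pf = mt_P[OF m k]
  have L: "lin_map (d k) (d (Suc k)) (E (Suc k))" using mt_E[OF m k] by simp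
  have cst: "\<And>a b. a \<in> PiE {..k} B \<Longrightarrow> b \<in> PiE {..k} B \<Longrightarrow> kd_both_st \<rho> E P a b k \<in> carrier_mat (d k) (d k)"
    using both_carrier[OF m] k PiE_bound by (metis Suc_leD)
  let ?D = "d (Suc k)"
  have "msum ?D (PiE {..Suc k} B) (\<lambda>a. msum ?D (PiE {..Suc k} B) (\<lambda>b. kd_both_st \<rho> E P a b (Suc k)))
      = msum ?D (B (Suc k)) (\<lambda>y. msum ?D (PiE {..k} B) (\<lambda>a. msum ?D (PiE {..Suc k} B) (\<lambda>b. kd_both_st \<rho> E P (a(Suc k:=y)) b (Suc k))))"
    unfolding atMost_Suc_ins by (rule msum_PiE_insert) simp
  also have "\<dots> = msum ?D (B (Suc k)) (\<lambda>y. msum ?D (PiE {..k} B) (\<lambda>a. msum ?D (B (Suc k)) (\<lambda>z. msum ?D (PiE {..k} B) (\<lambda>b. kd_both_st \<rho> E P (a(Suc k:=y)) (b(Suc k:=z)) (Suc k)))))"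
    unfolding atMost_Suc_ins by (intro msum_cong msum_PiE_insert) simp
  also have "\<dots> = msum ?D (B (Suc k)) (\<lambda>y. msum ?D (PiE {..k} B) (\<lambda>a. msum ?D (B (Suc k)) (\<lambda>z. msum ?D (PiE {..k} B) (\<lambda>b. P (Suc k) y * E (Suc k) (kd_both_st \<rho> E P a b k) * P (Suc k) z))))"
  proof (intro msum_cong)
    fix y a z b
    have "kd_both_st \<rho> E P (a(Suc k:=y)) (b(Suc k:=z)) k = kd_both_st \<rho> E P a b k" by (rule both_cong) simp_all
    then show "kd_both_st \<rho> E P (a(Suc k:=y)) (b(Suc k:=z)) (Suc k) = P (Suc k) y * E (Suc k) (kd_both_st \<rho> E P a b k) * P (Suc k) z"
      by simp
  qed
  also have "\<dots> = E (Suc k) (msum (d k) (PiE {..k} B) (\<lambda>a. msum (d k) (PiE {..k} B) (\<lambda>b. kd_both_st \<rho> E P a b k)))"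
    by (rule step_both[OF L]) (use Pf cst mt_finPiE[OF m, of k] k in auto)
  also have "\<dots> = chan \<rho> E (Suc k)" using IH by simp
  finally show ?case .
qed


lemma out_bound: "g \<in> outcomes n B \<Longrightarrow> i \<le> n \<Longrightarrow> g i \<in> B i"
  unfolding outcomes_def by (rule PiE_bound)

lemma S_ge1: "(\<Sum>x\<in>A. Q x) = 1 \<Longrightarrow> 1 \<le> (\<Sum>x\<in>A. cmod (Q x))"
  by (metis norm_one norm_sum)

lemma right_S: assumes m: "mt_process n d \<rho> E B P"
  shows "1 \<le> (\<Sum>b\<in>outcomes n B. cmod (QKD_right n \<rho> E P b))"
proof (rule S_ge1)
  have "(\<Sum>b\<in>outcomes n B. QKD_right n \<rho> E P b) = mtrace (msum (d n) (outcomes n B) (\<lambda>b. kd_right_st \<rho> E P b n))"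
    unfolding QKD_right_def by (rule mtrace_msum[symmetric]) (use right_carrier[OF m] out_bound in blast)
  also have "\<dots> = 1" using right_total[OF m, of n] chan_props[OF m, of n] by (simp add: outcomes_def)
  finally show "(\<Sum>b\<in>outcomes n B. QKD_right n \<rho> E P b) = 1" .
qed

lemma left_S: assumes m: "mt_process n d \<rho> E B P"
  shows "1 \<le> (\<Sum>b\<in>outcomes n B. cmod (QKD_left n \<rho> E P b))"
proof (rule S_ge1)
  have "(\<Sum>b\<in>outcomes n B. QKD_left n \<rho> E P b) = mtrace (msum (d n) (outcomes n B) (\<lambda>b. kd_left_st \<rho> E P b n))"
    unfolding QKD_left_def by (rule mtrace_msum[symmetric]) (use left_carrier[OF m] out_bound in blast)
  also have "\<dots> = 1" using left_total[OF m, of n] chan_props[OF m, of n] by (simp add: outcomes_def)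
  finally show "(\<Sum>b\<in>outcomes n B. QKD_left n \<rho> E P b) = 1" .
qed

lemma both_S: assumes m: "mt_process n d \<rho> E B P"
  shows "1 \<le> (\<Sum>ab\<in>outcomes n B \<times> outcomes n B. cmod (QKD_both n \<rho> E P ab))"
proof (rule S_ge1)
  have c: "\<And>a b. a \<in> outcomes n B \<Longrightarrow> b \<in> outcomes n B \<Longrightarrow> kd_both_st \<rho> E P a b n \<in> carrier_mat (d n) (d n)"
    using both_carrier[OF m] out_bound by blast
  have "(\<Sum>ab\<in>outcomes n B \<times> outcomes n B. QKD_both n \<rho> E P ab)
      = (\<Sum>a\<in>outcomes n B. \<Sum>b\<in>outcomes n B. mtrace (kd_both_st \<rho> E P a b n))"
    unfolding QKD_both_def by (simp add: sum.cartesian_product')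
  also have "\<dots> = (\<Sum>a\<in>outcomes n B. mtrace (msum (d n) (outcomes n B) (\<lambda>b. kd_both_st \<rho> E P a b n)))"
    by (intro sum.cong refl mtrace_msum[symmetric]) (use c in blast)
  also have "\<dots> = mtrace (msum (d n) (outcomes n B) (\<lambda>a. msum (d n) (outcomes n B) (\<lambda>b. kd_both_st \<rho> E P a b n)))"
    by (rule mtrace_msum[symmetric]) simp
  also have "\<dots> = 1" using both_total[OF m, of n] chan_props[OF m, of n] by (simp add: outcomes_def)
  finally show "(\<Sum>ab\<in>outcomes n B \<times> outcomes n B. QKD_both n \<rho> E P ab) = 1" .
qed

lemma sum_cmod_prod:
  assumes b: "bij_betw h (A1 \<times> A2) A" and q: "\<And>x y. x \<in> A1 \<Longrightarrow> y \<in> A2 \<Longrightarrow> Q (h (x,y)) = Q1 x * Q2 y"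
  shows "(\<Sum>a\<in>A. cmod (Q a)) = (\<Sum>x\<in>A1. cmod (Q1 x)) * (\<Sum>y\<in>A2. cmod (Q2 y))"
proof -
  have "(\<Sum>a\<in>A. cmod (Q a)) = (\<Sum>p\<in>A1 \<times> A2. cmod (Q (h p)))"
    using sum.reindex_bij_betw[OF b, of "\<lambda>a. cmod (Q a)"] by simp
  also have "\<dots> = (\<Sum>p\<in>A1 \<times> A2. cmod (Q1 (fst p)) * cmod (Q2 (snd p)))"
    by (rule sum.cong) (auto simp: q norm_mult)
  also have "\<dots> = (\<Sum>x\<in>A1. \<Sum>y\<in>A2. cmod (Q1 x) * cmod (Q2 y))"
    by (simp add: sum.cartesian_product')
  also have "\<dots> = (\<Sum>x\<in>A1. cmod (Q1 x)) * (\<Sum>y\<in>A2. cmod (Q2 y))"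
    by (simp add: sum_product)
  finally show ?thesis .
qed

lemma prod_B_eq: "prod_B B1 B2 = (\<lambda>k. B1 k \<times> B2 k)"
  by (rule ext) (simp add: prod_B_def)

definition pairf :: "nat \<Rightarrow> (nat \<Rightarrow> 'b) \<times> (nat \<Rightarrow> 'c) \<Rightarrow> nat \<Rightarrow> 'b \<times> 'c" where
  "pairf n xy = restrict (\<lambda>k. (fst xy k, snd xy k)) {..n}"

lemma pairf_fst: "i \<le> n \<Longrightarrow> fst (pairf n (x,y) i) = x i" by (simp add: pairf_def)
lemma pairf_snd: "i \<le> n \<Longrightarrow> snd (pairf n (x,y) i) = y i" by (simp add: pairf_def)

lemma bij_pairf: "bij_betw (pairf n) (outcomes n B1 \<times> outcomes n B2) (outcomes n (prod_B B1 B2))"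
proof (rule bij_betw_byWitness[where f'="\<lambda>b. (restrict (\<lambda>k. fst (b k)) {..n}, restrict (\<lambda>k. snd (b k)) {..n})"])
  show "\<forall>a\<in>outcomes n B1 \<times> outcomes n B2.
     (restrict (\<lambda>k. fst (pairf n a k)) {..n}, restrict (\<lambda>k. snd (pairf n a k)) {..n}) = a"
    by (auto simp: pairf_def outcomes_def PiE_iff extensional_def fun_eq_iff)
  show "\<forall>a'\<in>outcomes n (prod_B B1 B2).
     pairf n (restrict (\<lambda>k. fst (a' k)) {..n}, restrict (\<lambda>k. snd (a' k)) {..n}) = a'"
    by (auto simp: pairf_def outcomes_def PiE_iff extensional_def fun_eq_iff)
  show "pairf n ` (outcomes n B1 \<times> outcomes n B2) \<subseteq> outcomes n (prod_B B1 B2)"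
    by (auto simp: pairf_def outcomes_def PiE_iff prod_B_eq)
  show "(\<lambda>b. (restrict (\<lambda>k. fst (b k)) {..n}, restrict (\<lambda>k. snd (b k)) {..n})) ` outcomes n (prod_B B1 B2)
    \<subseteq> outcomes n B1 \<times> outcomes n B2"
    by (auto simp: outcomes_def PiE_iff prod_B_eq mem_Times_iff)
qed

definition pairf2 where
  "pairf2 n p = (pairf n (fst (fst p), fst (snd p)), pairf n (snd (fst p), snd (snd p)))"

lemma bij_pairf2: "bij_betw (pairf2 n) ((outcomes n B1 \<times> outcomes n B1) \<times> (outcomes n B2 \<times> outcomes n B2))
   (outcomes n (prod_B B1 B2) \<times> outcomes n (prod_B B1 B2))"
proof -
  let ?sw = "\<lambda>p. ((fst (fst p), fst (snd p)), (snd (fst p), snd (snd p)))"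
  have b1: "bij_betw ?sw ((outcomes n B1 \<times> outcomes n B1) \<times> (outcomes n B2 \<times> outcomes n B2))
     ((outcomes n B1 \<times> outcomes n B2) \<times> (outcomes n B1 \<times> outcomes n B2))"
    by (rule bij_betw_byWitness[where f'="\<lambda>p. ((fst (fst p), fst (snd p)), (snd (fst p), snd (snd p)))"]) auto
  have b2: "bij_betw (map_prod (pairf n) (pairf n)) ((outcomes n B1 \<times> outcomes n B2) \<times> (outcomes n B1 \<times> outcomes n B2))
     (outcomes n (prod_B B1 B2) \<times> outcomes n (prod_B B1 B2))"
    using bij_pairf[of n B1 B2] by (rule bij_betw_map_prod) (rule bij_pairf)
  have "bij_betw (map_prod (pairf n) (pairf n) \<circ> ?sw) ((outcomes n B1 \<times> outcomes n B1) \<times> (outcomes n B2 \<times> outcomes n B2))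
     (outcomes n (prod_B B1 B2) \<times> outcomes n (prod_B B1 B2))"
    by (rule bij_betw_trans[OF b1 b2])
  moreover have "map_prod (pairf n) (pairf n) \<circ> ?sw = pairf2 n"
    by (rule ext) (simp add: pairf2_def)
  ultimately show ?thesis by metis
qed


lemma E_facts: assumes m: "mt_process n d \<rho> E B P" and k: "Suc k \<le> n"
  shows "lin_map (d k) (d (Suc k)) (E (Suc k))" using mt_E[OF m k] by simp

lemma P_car: "mt_process n d \<rho> E B P \<Longrightarrow> k \<le> n \<Longrightarrow> b \<in> B k \<Longrightarrow> P k b \<in> carrier_mat (d k) (d k)"
  using mt_P by blast

lemma E_car: "mt_process n d \<rho> E B P \<Longrightarrow> Suc k \<le> n \<Longrightarrow> X \<in> carrier_mat (d k) (d k) \<Longrightarrow>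
   E (Suc k) X \<in> carrier_mat (d (Suc k)) (d (Suc k))"
  using mt_E unfolding lin_map_def by blast

lemma right_prod:
  assumes p1: "mt_process n d1 \<rho>1 E1 B1 P1" and p2: "mt_process n d2 \<rho>2 E2 B2 P2"
  shows "k \<le> n \<Longrightarrow> (\<And>i. i \<le> k \<Longrightarrow> fst (b i) \<in> B1 i \<and> snd (b i) \<in> B2 i) \<Longrightarrow>
    kd_right_st (kron \<rho>1 \<rho>2) (prod_E d1 d2 E1 E2) (prod_P P1 P2) b k
    = kron (kd_right_st \<rho>1 E1 P1 (\<lambda>i. fst (b i)) k) (kd_right_st \<rho>2 E2 P2 (\<lambda>i. snd (b i)) k)"
proof (induction k)
  case 0
  have r1: "\<rho>1 \<in> carrier_mat (d1 0) (d1 0)" using mt_rho[OF p1] by simp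
  have r2: "\<rho>2 \<in> carrier_mat (d2 0) (d2 0)" using mt_rho[OF p2] by simp
  have q1: "P1 0 (fst (b 0)) \<in> carrier_mat (d1 0) (d1 0)" using P_car[OF p1] 0 by simp
  have q2: "P2 0 (snd (b 0)) \<in> carrier_mat (d2 0) (d2 0)" using P_car[OF p2] 0 by simp
  show ?case by (simp add: prod_P_def kron_mult[OF r1 q1 r2 q2])
next
  case (Suc k)
  have k: "Suc k \<le> n" by fact
  have b: "\<And>i. i \<le> Suc k \<Longrightarrow> fst (b i) \<in> B1 i \<and> snd (b i) \<in> B2 i" by fact
  have IH: "kd_right_st (kron \<rho>1 \<rho>2) (prod_E d1 d2 E1 E2) (prod_P P1 P2) b k
    = kron (kd_right_st \<rho>1 E1 P1 (\<lambda>i. fst (b i)) k) (kd_right_st \<rho>2 E2 P2 (\<lambda>i. snd (b i)) k)"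
    using Suc by simp
  have X1: "kd_right_st \<rho>1 E1 P1 (\<lambda>i. fst (b i)) k \<in> carrier_mat (d1 k) (d1 k)"
    by (rule right_carrier[OF p1]) (use k b in auto)
  have X2: "kd_right_st \<rho>2 E2 P2 (\<lambda>i. snd (b i)) k \<in> carrier_mat (d2 k) (d2 k)"
    by (rule right_carrier[OF p2]) (use k b in auto)
  have q1: "P1 (Suc k) (fst (b (Suc k))) \<in> carrier_mat (d1 (Suc k)) (d1 (Suc k))" using P_car[OF p1 k] b by simp
  have q2: "P2 (Suc k) (snd (b (Suc k))) \<in> carrier_mat (d2 (Suc k)) (d2 (Suc k))" using P_car[OF p2 k] b by simp
  have "kd_right_st (kron \<rho>1 \<rho>2) (prod_E d1 d2 E1 E2) (prod_P P1 P2) b (Suc k)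
     = tensor_map (d1 k) (d2 k) (d1 (Suc k)) (d2 (Suc k)) (E1 (Suc k)) (E2 (Suc k))
         (kron (kd_right_st \<rho>1 E1 P1 (\<lambda>i. fst (b i)) k) (kd_right_st \<rho>2 E2 P2 (\<lambda>i. snd (b i)) k))
       * kron (P1 (Suc k) (fst (b (Suc k)))) (P2 (Suc k) (snd (b (Suc k))))"
    using IH by (simp add: prod_E_def prod_P_def)
  also have "\<dots> = kron (E1 (Suc k) (kd_right_st \<rho>1 E1 P1 (\<lambda>i. fst (b i)) k)) (E2 (Suc k) (kd_right_st \<rho>2 E2 P2 (\<lambda>i. snd (b i)) k))
       * kron (P1 (Suc k) (fst (b (Suc k)))) (P2 (Suc k) (snd (b (Suc k))))"
    by (simp add: tensor_kron[OF E_facts[OF p1 k] E_facts[OF p2 k] X1 X2])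
  also have "\<dots> = kron (E1 (Suc k) (kd_right_st \<rho>1 E1 P1 (\<lambda>i. fst (b i)) k) * P1 (Suc k) (fst (b (Suc k))))
      (E2 (Suc k) (kd_right_st \<rho>2 E2 P2 (\<lambda>i. snd (b i)) k) * P2 (Suc k) (snd (b (Suc k))))"
    by (rule kron_mult[OF E_car[OF p1 k X1] q1 E_car[OF p2 k X2] q2])
  finally show ?case by simp
qed

lemma left_prod:
  assumes p1: "mt_process n d1 \<rho>1 E1 B1 P1" and p2: "mt_process n d2 \<rho>2 E2 B2 P2"
  shows "k \<le> n \<Longrightarrow> (\<And>i. i \<le> k \<Longrightarrow> fst (b i) \<in> B1 i \<and> snd (b i) \<in> B2 i) \<Longrightarrow>
    kd_left_st (kron \<rho>1 \<rho>2) (prod_E d1 d2 E1 E2) (prod_P P1 P2) b k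
    = kron (kd_left_st \<rho>1 E1 P1 (\<lambda>i. fst (b i)) k) (kd_left_st \<rho>2 E2 P2 (\<lambda>i. snd (b i)) k)"
proof (induction k)
  case 0
  have r1: "\<rho>1 \<in> carrier_mat (d1 0) (d1 0)" using mt_rho[OF p1] by simp
  have r2: "\<rho>2 \<in> carrier_mat (d2 0) (d2 0)" using mt_rho[OF p2] by simp
  have q1: "P1 0 (fst (b 0)) \<in> carrier_mat (d1 0) (d1 0)" using P_car[OF p1] 0 by simp
  have q2: "P2 0 (snd (b 0)) \<in> carrier_mat (d2 0) (d2 0)" using P_car[OF p2] 0 by simp
  show ?case by (simp add: prod_P_def kron_mult[OF q1 r1 q2 r2])
next
  case (Suc k)
  have k: "Suc k \<le> n" by fact
  have b: "\<And>i. i \<le> Suc k \<Longrightarrow> fst (b i) \<in> B1 i \<and> snd (b i) \<in> B2 i" by fact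
  have IH: "kd_left_st (kron \<rho>1 \<rho>2) (prod_E d1 d2 E1 E2) (prod_P P1 P2) b k
    = kron (kd_left_st \<rho>1 E1 P1 (\<lambda>i. fst (b i)) k) (kd_left_st \<rho>2 E2 P2 (\<lambda>i. snd (b i)) k)"
    using Suc by simp
  have X1: "kd_left_st \<rho>1 E1 P1 (\<lambda>i. fst (b i)) k \<in> carrier_mat (d1 k) (d1 k)"
    by (rule left_carrier[OF p1]) (use k b in auto)
  have X2: "kd_left_st \<rho>2 E2 P2 (\<lambda>i. snd (b i)) k \<in> carrier_mat (d2 k) (d2 k)"
    by (rule left_carrier[OF p2]) (use k b in auto)
  have q1: "P1 (Suc k) (fst (b (Suc k))) \<in> carrier_mat (d1 (Suc k)) (d1 (Suc k))" using P_car[OF p1 k] b by simp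
  have q2: "P2 (Suc k) (snd (b (Suc k))) \<in> carrier_mat (d2 (Suc k)) (d2 (Suc k))" using P_car[OF p2 k] b by simp
  have "kd_left_st (kron \<rho>1 \<rho>2) (prod_E d1 d2 E1 E2) (prod_P P1 P2) b (Suc k)
     = kron (P1 (Suc k) (fst (b (Suc k)))) (P2 (Suc k) (snd (b (Suc k)))) *
       tensor_map (d1 k) (d2 k) (d1 (Suc k)) (d2 (Suc k)) (E1 (Suc k)) (E2 (Suc k))
         (kron (kd_left_st \<rho>1 E1 P1 (\<lambda>i. fst (b i)) k) (kd_left_st \<rho>2 E2 P2 (\<lambda>i. snd (b i)) k))"
    using IH by (simp add: prod_E_def prod_P_def)
  also have "\<dots> = kron (P1 (Suc k) (fst (b (Suc k)))) (P2 (Suc k) (snd (b (Suc k)))) *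
       kron (E1 (Suc k) (kd_left_st \<rho>1 E1 P1 (\<lambda>i. fst (b i)) k)) (E2 (Suc k) (kd_left_st \<rho>2 E2 P2 (\<lambda>i. snd (b i)) k))"
    by (simp add: tensor_kron[OF E_facts[OF p1 k] E_facts[OF p2 k] X1 X2])
  also have "\<dots> = kron (P1 (Suc k) (fst (b (Suc k))) * E1 (Suc k) (kd_left_st \<rho>1 E1 P1 (\<lambda>i. fst (b i)) k))
      (P2 (Suc k) (snd (b (Suc k))) * E2 (Suc k) (kd_left_st \<rho>2 E2 P2 (\<lambda>i. snd (b i)) k))"
    by (rule kron_mult[OF q1 E_car[OF p1 k X1] q2 E_car[OF p2 k X2]])
  finally show ?case by simp
qed

lemma both_prod:
  assumes p1: "mt_process n d1 \<rho>1 E1 B1 P1" and p2: "mt_process n d2 \<rho>2 E2 B2 P2"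
  shows "k \<le> n \<Longrightarrow> (\<And>i. i \<le> k \<Longrightarrow> fst (a i) \<in> B1 i \<and> snd (a i) \<in> B2 i) \<Longrightarrow>
    (\<And>i. i \<le> k \<Longrightarrow> fst (b i) \<in> B1 i \<and> snd (b i) \<in> B2 i) \<Longrightarrow>
    kd_both_st (kron \<rho>1 \<rho>2) (prod_E d1 d2 E1 E2) (prod_P P1 P2) a b k
    = kron (kd_both_st \<rho>1 E1 P1 (\<lambda>i. fst (a i)) (\<lambda>i. fst (b i)) k) (kd_both_st \<rho>2 E2 P2 (\<lambda>i. snd (a i)) (\<lambda>i. snd (b i)) k)"
proof (induction k)
  case 0
  have r1: "\<rho>1 \<in> carrier_mat (d1 0) (d1 0)" using mt_rho[OF p1] by simp
  have r2: "\<rho>2 \<in> carrier_mat (d2 0) (d2 0)" using mt_rho[OF p2] by simp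
  have q1: "P1 0 (fst (a 0)) \<in> carrier_mat (d1 0) (d1 0)" using P_car[OF p1] 0 by simp
  have q2: "P2 0 (snd (a 0)) \<in> carrier_mat (d2 0) (d2 0)" using P_car[OF p2] 0 by simp
  have s1: "P1 0 (fst (b 0)) \<in> carrier_mat (d1 0) (d1 0)" using P_car[OF p1] 0 by simp
  have s2: "P2 0 (snd (b 0)) \<in> carrier_mat (d2 0) (d2 0)" using P_car[OF p2] 0 by simp
  show ?case
    by (simp add: prod_P_def kron_mult[OF q1 r1 q2 r2] kron_mult[OF mult_carrier_mat[OF q1 r1] s1 mult_carrier_mat[OF q2 r2] s2])
next
  case (Suc k)
  have k: "Suc k \<le> n" by fact
  have a: "\<And>i. i \<le> Suc k \<Longrightarrow> fst (a i) \<in> B1 i \<and> snd (a i) \<in> B2 i" by fact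
  have b: "\<And>i. i \<le> Suc k \<Longrightarrow> fst (b i) \<in> B1 i \<and> snd (b i) \<in> B2 i" by fact
  have IH: "kd_both_st (kron \<rho>1 \<rho>2) (prod_E d1 d2 E1 E2) (prod_P P1 P2) a b k
    = kron (kd_both_st \<rho>1 E1 P1 (\<lambda>i. fst (a i)) (\<lambda>i. fst (b i)) k) (kd_both_st \<rho>2 E2 P2 (\<lambda>i. snd (a i)) (\<lambda>i. snd (b i)) k)"
    using Suc by simp
  have X1: "kd_both_st \<rho>1 E1 P1 (\<lambda>i. fst (a i)) (\<lambda>i. fst (b i)) k \<in> carrier_mat (d1 k) (d1 k)"
    by (rule both_carrier[OF p1]) (use k a b in auto)
  have X2: "kd_both_st \<rho>2 E2 P2 (\<lambda>i. snd (a i)) (\<lambda>i. snd (b i)) k \<in> carrier_mat (d2 k) (d2 k)"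
    by (rule both_carrier[OF p2]) (use k a b in auto)
  have q1: "P1 (Suc k) (fst (a (Suc k))) \<in> carrier_mat (d1 (Suc k)) (d1 (Suc k))" using P_car[OF p1 k] a by simp
  have q2: "P2 (Suc k) (snd (a (Suc k))) \<in> carrier_mat (d2 (Suc k)) (d2 (Suc k))" using P_car[OF p2 k] a by simp
  have s1: "P1 (Suc k) (fst (b (Suc k))) \<in> carrier_mat (d1 (Suc k)) (d1 (Suc k))" using P_car[OF p1 k] b by simp
  have s2: "P2 (Suc k) (snd (b (Suc k))) \<in> carrier_mat (d2 (Suc k)) (d2 (Suc k))" using P_car[OF p2 k] b by simp
  note e1 = E_car[OF p1 k X1] and e2 = E_car[OF p2 k X2]
  have "kd_both_st (kron \<rho>1 \<rho>2) (prod_E d1 d2 E1 E2) (prod_P P1 P2) a b (Suc k)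
     = kron (P1 (Suc k) (fst (a (Suc k)))) (P2 (Suc k) (snd (a (Suc k)))) *
       tensor_map (d1 k) (d2 k) (d1 (Suc k)) (d2 (Suc k)) (E1 (Suc k)) (E2 (Suc k))
         (kron (kd_both_st \<rho>1 E1 P1 (\<lambda>i. fst (a i)) (\<lambda>i. fst (b i)) k) (kd_both_st \<rho>2 E2 P2 (\<lambda>i. snd (a i)) (\<lambda>i. snd (b i)) k))
       * kron (P1 (Suc k) (fst (b (Suc k)))) (P2 (Suc k) (snd (b (Suc k))))"
    using IH by (simp add: prod_E_def prod_P_def)
  also have "\<dots> = kron (P1 (Suc k) (fst (a (Suc k)))) (P2 (Suc k) (snd (a (Suc k)))) *
       kron (E1 (Suc k) (kd_both_st \<rho>1 E1 P1 (\<lambda>i. fst (a i)) (\<lambda>i. fst (b i)) k)) (E2 (Suc k) (kd_both_st \<rho>2 E2 P2 (\<lambda>i. snd (a i)) (\<lambda>i. snd (b i)) k))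
       * kron (P1 (Suc k) (fst (b (Suc k)))) (P2 (Suc k) (snd (b (Suc k))))"
    by (simp add: tensor_kron[OF E_facts[OF p1 k] E_facts[OF p2 k] X1 X2])
  also have "\<dots> = kron (P1 (Suc k) (fst (a (Suc k))) * E1 (Suc k) (kd_both_st \<rho>1 E1 P1 (\<lambda>i. fst (a i)) (\<lambda>i. fst (b i)) k) * P1 (Suc k) (fst (b (Suc k))))
      (P2 (Suc k) (snd (a (Suc k))) * E2 (Suc k) (kd_both_st \<rho>2 E2 P2 (\<lambda>i. snd (a i)) (\<lambda>i. snd (b i)) k) * P2 (Suc k) (snd (b (Suc k))))"
    by (simp add: kron_mult[OF q1 e1 q2 e2] kron_mult[OF mult_carrier_mat[OF q1 e1] s1 mult_carrier_mat[OF q2 e2] s2])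
  finally show ?case by simp
qed


lemma num_facts: "(S::real) = S1*S2 \<Longrightarrow> 1 \<le> S1 \<Longrightarrow> 1 \<le> S2 \<Longrightarrow>
   S - 1 = (S1-1)*(S2-1) + (S1-1) + (S2-1) \<and> ln S = ln S1 + ln S2"
proof -
  assume s: "S = S1*S2" and a: "1 \<le> S1" and b: "1 \<le> S2"
  have "S - 1 = (S1-1)*(S2-1) + (S1-1) + (S2-1)" using s by (simp add: algebra_simps)
  moreover have "ln S = ln S1 + ln S2" using s a b by (simp add: ln_mult_pos)
  ultimately show ?thesis by simp
qed

lemma right_val:
  assumes p1: "mt_process n d1 \<rho>1 E1 B1 P1" and p2: "mt_process n d2 \<rho>2 E2 B2 P2"
    and x: "x \<in> outcomes n B1" and y: "y \<in> outcomes n B2"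
  shows "QKD_right n (kron \<rho>1 \<rho>2) (prod_E d1 d2 E1 E2) (prod_P P1 P2) (pairf n (x,y))
    = QKD_right n \<rho>1 E1 P1 x * QKD_right n \<rho>2 E2 P2 y"
proof -
  have bnd: "\<And>i. i \<le> n \<Longrightarrow> fst (pairf n (x,y) i) \<in> B1 i \<and> snd (pairf n (x,y) i) \<in> B2 i"
    using out_bound[OF x] out_bound[OF y] by (simp add: pairf_fst pairf_snd)
  have c1: "kd_right_st \<rho>1 E1 P1 (\<lambda>i. fst (pairf n (x,y) i)) n = kd_right_st \<rho>1 E1 P1 x n"
    by (rule right_cong) (simp add: pairf_fst)
  have c2: "kd_right_st \<rho>2 E2 P2 (\<lambda>i. snd (pairf n (x,y) i)) n = kd_right_st \<rho>2 E2 P2 y n"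
    by (rule right_cong) (simp add: pairf_snd)
  have X1: "kd_right_st \<rho>1 E1 P1 x n \<in> carrier_mat (d1 n) (d1 n)" by (rule right_carrier[OF p1 order.refl out_bound[OF x]])
  have X2: "kd_right_st \<rho>2 E2 P2 y n \<in> carrier_mat (d2 n) (d2 n)" by (rule right_carrier[OF p2 order.refl out_bound[OF y]])
  show ?thesis unfolding QKD_right_def
    using right_prod[OF p1 p2 order.refl bnd] c1 c2 mtrace_kron[OF X1 X2] by simp
qed

lemma left_val:
  assumes p1: "mt_process n d1 \<rho>1 E1 B1 P1" and p2: "mt_process n d2 \<rho>2 E2 B2 P2"
    and x: "x \<in> outcomes n B1" and y: "y \<in> outcomes n B2"
  shows "QKD_left n (kron \<rho>1 \<rho>2) (prod_E d1 d2 E1 E2) (prod_P P1 P2) (pairf n (x,y))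
    = QKD_left n \<rho>1 E1 P1 x * QKD_left n \<rho>2 E2 P2 y"
proof -
  have bnd: "\<And>i. i \<le> n \<Longrightarrow> fst (pairf n (x,y) i) \<in> B1 i \<and> snd (pairf n (x,y) i) \<in> B2 i"
    using out_bound[OF x] out_bound[OF y] by (simp add: pairf_fst pairf_snd)
  have c1: "kd_left_st \<rho>1 E1 P1 (\<lambda>i. fst (pairf n (x,y) i)) n = kd_left_st \<rho>1 E1 P1 x n"
    by (rule left_cong) (simp add: pairf_fst)
  have c2: "kd_left_st \<rho>2 E2 P2 (\<lambda>i. snd (pairf n (x,y) i)) n = kd_left_st \<rho>2 E2 P2 y n"
    by (rule left_cong) (simp add: pairf_snd)
  have X1: "kd_left_st \<rho>1 E1 P1 x n \<in> carrier_mat (d1 n) (d1 n)" by (rule left_carrier[OF p1 order.refl out_bound[OF x]])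
  have X2: "kd_left_st \<rho>2 E2 P2 y n \<in> carrier_mat (d2 n) (d2 n)" by (rule left_carrier[OF p2 order.refl out_bound[OF y]])
  show ?thesis unfolding QKD_left_def
    using left_prod[OF p1 p2 order.refl bnd] c1 c2 mtrace_kron[OF X1 X2] by simp
qed

lemma both_val:
  assumes p1: "mt_process n d1 \<rho>1 E1 B1 P1" and p2: "mt_process n d2 \<rho>2 E2 B2 P2"
    and x: "x \<in> outcomes n B1 \<times> outcomes n B1" and y: "y \<in> outcomes n B2 \<times> outcomes n B2"
  shows "QKD_both n (kron \<rho>1 \<rho>2) (prod_E d1 d2 E1 E2) (prod_P P1 P2) (pairf2 n (x,y))
    = QKD_both n \<rho>1 E1 P1 x * QKD_both n \<rho>2 E2 P2 y"
proof -
  obtain a1 b1 where xe: "x = (a1, b1)" by (cases x)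
  obtain a2 b2 where ye: "y = (a2, b2)" by (cases y)
  have a1: "a1 \<in> outcomes n B1" and b1: "b1 \<in> outcomes n B1" using x xe by auto
  have a2: "a2 \<in> outcomes n B2" and b2: "b2 \<in> outcomes n B2" using y ye by auto
  have pe: "pairf2 n (x,y) = (pairf n (a1,a2), pairf n (b1,b2))" by (simp add: pairf2_def xe ye)
  have bnda: "\<And>i. i \<le> n \<Longrightarrow> fst (pairf n (a1,a2) i) \<in> B1 i \<and> snd (pairf n (a1,a2) i) \<in> B2 i"
    using out_bound[OF a1] out_bound[OF a2] by (simp add: pairf_fst pairf_snd)
  have bndb: "\<And>i. i \<le> n \<Longrightarrow> fst (pairf n (b1,b2) i) \<in> B1 i \<and> snd (pairf n (b1,b2) i) \<in> B2 i"
    using out_bound[OF b1] out_bound[OF b2] by (simp add: pairf_fst pairf_snd)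
  have c1: "kd_both_st \<rho>1 E1 P1 (\<lambda>i. fst (pairf n (a1,a2) i)) (\<lambda>i. fst (pairf n (b1,b2) i)) n = kd_both_st \<rho>1 E1 P1 a1 b1 n"
    by (rule both_cong) (simp_all add: pairf_fst)
  have c2: "kd_both_st \<rho>2 E2 P2 (\<lambda>i. snd (pairf n (a1,a2) i)) (\<lambda>i. snd (pairf n (b1,b2) i)) n = kd_both_st \<rho>2 E2 P2 a2 b2 n"
    by (rule both_cong) (simp_all add: pairf_snd)
  have X1: "kd_both_st \<rho>1 E1 P1 a1 b1 n \<in> carrier_mat (d1 n) (d1 n)"
    by (rule both_carrier[OF p1 order.refl out_bound[OF a1] out_bound[OF b1]])
  have X2: "kd_both_st \<rho>2 E2 P2 a2 b2 n \<in> carrier_mat (d2 n) (d2 n)"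
    by (rule both_carrier[OF p2 order.refl out_bound[OF a2] out_bound[OF b2]])
  show ?thesis unfolding QKD_both_def pe xe ye
    using both_prod[OF p1 p2 order.refl bnda bndb] c1 c2 mtrace_kron[OF X1 X2] by (simp add: pairf2_def)
qed

theorem mainTheorem10:
  fixes n :: nat and d1 d2 :: "nat \<Rightarrow> nat"
    and \<rho>1 \<rho>2 :: "complex mat"
    and E1 E2 :: "nat \<Rightarrow> complex mat \<Rightarrow> complex mat"
    and B1 :: "nat \<Rightarrow> 'b set" and P1 :: "nat \<Rightarrow> 'b \<Rightarrow> complex mat"
    and B2 :: "nat \<Rightarrow> 'c set" and P2 :: "nat \<Rightarrow> 'c \<Rightarrow> complex mat"
  assumes p1: "mt_process n d1 \<rho>1 E1 B1 P1"
    and p2: "mt_process n d2 \<rho>2 E2 B2 P2"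
  defines "\<rho> \<equiv> kron \<rho>1 \<rho>2"
    and "E \<equiv> prod_E d1 d2 E1 E2"
    and "B \<equiv> prod_B B1 B2"
    and "P \<equiv> prod_P P1 P2"
  shows
   "negN (QKD_right n \<rho> E P) (outcomes n B) =
      negN (QKD_right n \<rho>1 E1 P1) (outcomes n B1) * negN (QKD_right n \<rho>2 E2 P2) (outcomes n B2)
      + negN (QKD_right n \<rho>1 E1 P1) (outcomes n B1) + negN (QKD_right n \<rho>2 E2 P2) (outcomes n B2)
    \<and> logN (QKD_right n \<rho> E P) (outcomes n B) =
      logN (QKD_right n \<rho>1 E1 P1) (outcomes n B1) + logN (QKD_right n \<rho>2 E2 P2) (outcomes n B2)
    \<and> negN (QKD_left n \<rho> E P) (outcomes n B) =
      negN (QKD_left n \<rho>1 E1 P1) (outcomes n B1) * negN (QKD_left n \<rho>2 E2 P2) (outcomes n B2)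
      + negN (QKD_left n \<rho>1 E1 P1) (outcomes n B1) + negN (QKD_left n \<rho>2 E2 P2) (outcomes n B2)
    \<and> logN (QKD_left n \<rho> E P) (outcomes n B) =
      logN (QKD_left n \<rho>1 E1 P1) (outcomes n B1) + logN (QKD_left n \<rho>2 E2 P2) (outcomes n B2)
    \<and> negN (QKD_both n \<rho> E P) (outcomes n B \<times> outcomes n B) =
      negN (QKD_both n \<rho>1 E1 P1) (outcomes n B1 \<times> outcomes n B1)
        * negN (QKD_both n \<rho>2 E2 P2) (outcomes n B2 \<times> outcomes n B2)
      + negN (QKD_both n \<rho>1 E1 P1) (outcomes n B1 \<times> outcomes n B1)
      + negN (QKD_both n \<rho>2 E2 P2) (outcomes n B2 \<times> outcomes n B2)
    \<and> logN (QKD_both n \<rho> E P) (outcomes n B \<times> outcomes n B) =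
      logN (QKD_both n \<rho>1 E1 P1) (outcomes n B1 \<times> outcomes n B1)
      + logN (QKD_both n \<rho>2 E2 P2) (outcomes n B2 \<times> outcomes n B2)"
proof -
  have R: "(\<Sum>b\<in>outcomes n B. cmod (QKD_right n \<rho> E P b)) =
     (\<Sum>b\<in>outcomes n B1. cmod (QKD_right n \<rho>1 E1 P1 b)) * (\<Sum>b\<in>outcomes n B2. cmod (QKD_right n \<rho>2 E2 P2 b))"
    unfolding \<rho>_def E_def B_def P_def
    by (rule sum_cmod_prod[OF bij_pairf]) (rule right_val[OF p1 p2])
  have L: "(\<Sum>b\<in>outcomes n B. cmod (QKD_left n \<rho> E P b)) =
     (\<Sum>b\<in>outcomes n B1. cmod (QKD_left n \<rho>1 E1 P1 b)) * (\<Sum>b\<in>outcomes n B2. cmod (QKD_left n \<rho>2 E2 P2 b))"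
    unfolding \<rho>_def E_def B_def P_def
    by (rule sum_cmod_prod[OF bij_pairf]) (rule left_val[OF p1 p2])
  have D: "(\<Sum>b\<in>outcomes n B \<times> outcomes n B. cmod (QKD_both n \<rho> E P b)) =
     (\<Sum>b\<in>outcomes n B1 \<times> outcomes n B1. cmod (QKD_both n \<rho>1 E1 P1 b)) *
     (\<Sum>b\<in>outcomes n B2 \<times> outcomes n B2. cmod (QKD_both n \<rho>2 E2 P2 b))"
    unfolding \<rho>_def E_def B_def P_def
    by (rule sum_cmod_prod[OF bij_pairf2]) (rule both_val[OF p1 p2])
  note nR = num_facts[OF R right_S[OF p1] right_S[OF p2]]
  note nL = num_facts[OF L left_S[OF p1] left_S[OF p2]]
  note nD = num_facts[OF D both_S[OF p1] both_S[OF p2]]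
  show ?thesis unfolding negN_def logN_def using nR nL nD by simp
qed

end
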